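(* Let $N\geq2$ be even and let $r,s$ be even non-negative integers. Then $$[W^{0,r}_0,W^{+,s}_0]=-8W^{+,r+s+2}_0+8W^{+,r+s}_0,\qquad [W^{0,r}_0,W^{-,s}_0]=8W^{-,r+s+2}_0-8W^{-,r+s}_0,$$ $$[W^{+,r}_0,W^{-,s}_0]=4W^{0,r+s+2}_0-4W^{0,r+s}_0.$$
   Context: On $\mathcal{H}_N=(\mathbb{C}^2)^{\otimes N}$ ($N$ even) let $c_j^\dagger=i^{j-1}\,i^{\sigma^z_1+\dots+\sigma^z_{j-1}}\sigma^+_j$, $c_j=i^{-j+1}\,i^{-\sigma^z_1-\dots-\sigma^z_{j-1}}\sigma^-_j$ (Jordan–Wigner fermions). For $k=1,\dots,N-1$ let $A_k(j)=\tfrac12(1+ie^{-i\pi k/N})e^{i\pi kj/N}-\tfrac12(1+ie^{i\pi k/N})e^{-i\pi kj/N}$, $\theta_k^\dagger=\sum_jA_k(j)c_j^\dagger$, $\theta_k=-i\sum_jA_k(j)c_j$; for $-\tfrac N2+1\leq n\leq\tfrac N2-1$, $n\neq0$, $\eta^+_n=\sqrt{\tfrac{n}{N\sin(\pi n/N)}}\theta^\dagger_{N/2+n}$, $\eta^-_n=\sqrt{\tfrac{n}{N\sin(\pi n/N)}}\theta_{N/2-n}$, and $\eta^+_0=\theta^\dagger_{N/2}/\sqrt\pi$, $\eta^-_0=\theta_{N/2}/\sqrt\pi$. Convention: $\frac{\sin(\pi j/N)}{j}\big|_{j=0}=\frac{\pi}{N}$. For $r\geq0$ let $U_{r}(j_1,j_2)=\sin\bigl(\pi\tfrac{j_1-j_2}{2N}\bigr)\cos^r\bigl(\pi\tfrac{j_1-j_2}{2N}\bigr)\bigl((-1)^r+1\bigr)\delta_{j_1+j_2,0}+2\cos\bigl(\pi\tfrac{j_1+j_2}{2N}\bigr)\sin^r\bigl(\pi\tfrac{j_1+j_2}{2N}\bigr)\bigl(1+(-1)^r\bigr)\delta_{j_1-j_2,-N}$,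 and with $S(j_1,j_2)=\sqrt{\tfrac{\sin(\pi j_1/N)}{j_1}}\sqrt{\tfrac{\sin(\pi j_2/N)}{j_2}}$ and all sums over $-\tfrac N2+1\leq j_1,j_2\leq\tfrac N2-1$ define $W^{+,r}_0=\sum S(j_1,j_2)U_r(j_1,j_2)\eta^+_{j_1}\eta^+_{j_2}$, $W^{-,r}_0=\sum S(j_1,j_2)U_r(j_1,j_2)\eta^-_{j_1}\eta^-_{j_2}$, $W^{0,r}_0=\sum S(j_1,j_2)U_r(j_1,j_2)(\eta^+_{j_1}\eta^-_{j_2}+\eta^-_{j_1}\eta^+_{j_2})$. *)

theory Defs
  imports Complex_Main "Jordan_Normal_Form.Matrix"
begin

(* Hilbert space H_N = (C^2)^{\<otimes>N} with computational basis |a>, a < 2^N.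
   Site j (1 \<le> j \<le> N) corresponds to bit (j-1) of a; bit set = spin up (sigma^z = +1). *)

definition dimH :: "nat \<Rightarrow> nat" where
  "dimH N = 2 ^ N"

definition sz_val :: "nat \<Rightarrow> nat \<Rightarrow> int" where
  "sz_val a j = (if bit a (j - 1) then 1 else -1)"

definition sigma_plus :: "nat \<Rightarrow> nat \<Rightarrow> complex mat" where
  "sigma_plus N j = mat (dimH N) (dimH N)
     (\<lambda>(a, b). if \<not> bit b (j - 1) \<and> a = b + 2 ^ (j - 1) then 1 else 0)"

definition sigma_minus :: "nat \<Rightarrow> nat \<Rightarrow> complex mat" where
  "sigma_minus N j = mat (dimH N) (dimH N)
     (\<lambda>(a, b). if bit b (j - 1) \<and> a + 2 ^ (j - 1) = b then 1 else 0)"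

definition jw_string :: "int \<Rightarrow> nat \<Rightarrow> nat \<Rightarrow> complex mat" where
  "jw_string eps N j = mat (dimH N) (dimH N)
     (\<lambda>(a, b). if a = b then \<i> powi (eps * (\<Sum>l\<in>{1..<j}. sz_val a l)) else 0)"

definition cdag :: "nat \<Rightarrow> nat \<Rightarrow> complex mat" where
  "cdag N j = (\<i> powi (int j - 1)) \<cdot>\<^sub>m (jw_string 1 N j * sigma_plus N j)"

definition cann :: "nat \<Rightarrow> nat \<Rightarrow> complex mat" where
  "cann N j = (\<i> powi (- int j + 1)) \<cdot>\<^sub>m (jw_string (-1) N j * sigma_minus N j)"

definition msum :: "nat \<Rightarrow> 'i set \<Rightarrow> ('i \<Rightarrow> complex mat) \<Rightarrow> complex mat" where
  "msum N S f = mat (dimH N) (dimH N) (\<lambda>ij. \<Sum>x\<in>S. f x $$ ij)"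

definition Acoef :: "nat \<Rightarrow> nat \<Rightarrow> nat \<Rightarrow> complex" where
  "Acoef N k j =
     (1/2) * (1 + \<i> * cis (- pi * k / N)) * cis (pi * k * j / N)
   - (1/2) * (1 + \<i> * cis (pi * k / N)) * cis (- pi * k * j / N)"

definition thetadag :: "nat \<Rightarrow> nat \<Rightarrow> complex mat" where
  "thetadag N k = msum N {1..N} (\<lambda>j. Acoef N k j \<cdot>\<^sub>m cdag N j)"

definition theta :: "nat \<Rightarrow> nat \<Rightarrow> complex mat" where
  "theta N k = (- \<i>) \<cdot>\<^sub>m msum N {1..N} (\<lambda>j. Acoef N k j \<cdot>\<^sub>m cann N j)"

definition eta_p :: "nat \<Rightarrow> int \<Rightarrow> complex mat" where
  "eta_p N n = (if n = 0 then complex_of_real (1 / sqrt pi) \<cdot>\<^sub>m thetadag N (N div 2)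
     else complex_of_real (sqrt (n / (N * sin (pi * n / N)))) \<cdot>\<^sub>m thetadag N (nat (int (N div 2) + n)))"

definition eta_m :: "nat \<Rightarrow> int \<Rightarrow> complex mat" where
  "eta_m N n = (if n = 0 then complex_of_real (1 / sqrt pi) \<cdot>\<^sub>m theta N (N div 2)
     else complex_of_real (sqrt (n / (N * sin (pi * n / N)))) \<cdot>\<^sub>m theta N (nat (int (N div 2) - n)))"

definition sinc_fac :: "nat \<Rightarrow> int \<Rightarrow> real" where
  "sinc_fac N j = (if j = 0 then pi / N else sin (pi * j / N) / j)"

definition Sfac :: "nat \<Rightarrow> int \<Rightarrow> int \<Rightarrow> real" where
  "Sfac N j1 j2 = sqrt (sinc_fac N j1) * sqrt (sinc_fac N j2)"

definition Ucoef :: "nat \<Rightarrow> nat \<Rightarrow> int \<Rightarrow> int \<Rightarrow> real" where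
  "Ucoef N r j1 j2 =
     sin (pi * (j1 - j2) / (2 * N)) * cos (pi * (j1 - j2) / (2 * N)) ^ r * ((-1) ^ r + 1)
       * (if j1 + j2 = 0 then 1 else 0)
   + 2 * cos (pi * (j1 + j2) / (2 * N)) * sin (pi * (j1 + j2) / (2 * N)) ^ r * (1 + (-1) ^ r)
       * (if j1 - j2 = - int N then 1 else 0)"

definition mode_range :: "nat \<Rightarrow> int set" where
  "mode_range N = {- int (N div 2) + 1 .. int (N div 2) - 1}"

definition W_plus :: "nat \<Rightarrow> nat \<Rightarrow> complex mat" where
  "W_plus N r = msum N (mode_range N \<times> mode_range N)
     (\<lambda>(j1, j2). complex_of_real (Sfac N j1 j2 * Ucoef N r j1 j2) \<cdot>\<^sub>m (eta_p N j1 * eta_p N j2))"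

definition W_minus :: "nat \<Rightarrow> nat \<Rightarrow> complex mat" where
  "W_minus N r = msum N (mode_range N \<times> mode_range N)
     (\<lambda>(j1, j2). complex_of_real (Sfac N j1 j2 * Ucoef N r j1 j2) \<cdot>\<^sub>m (eta_m N j1 * eta_m N j2))"

definition W_zero :: "nat \<Rightarrow> nat \<Rightarrow> complex mat" where
  "W_zero N r = msum N (mode_range N \<times> mode_range N)
     (\<lambda>(j1, j2). complex_of_real (Sfac N j1 j2 * Ucoef N r j1 j2) \<cdot>\<^sub>m
        (eta_p N j1 * eta_m N j2 + eta_m N j1 * eta_p N j2))"

definition commutator :: "complex mat \<Rightarrow> complex mat \<Rightarrow> complex mat" where
  "commutator A B = A * B - B * A"

end

theory Submission
  imports Defs
begin

abbreviation "DD N \<equiv> carrier_mat (dimH N) (dimH N)"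

lemma mult_index:
  assumes "A \<in> carrier_mat n n" "B \<in> carrier_mat n n" "i < n" "j < n"
  shows "(A * B) $$ (i,j) = (\<Sum>l<n. A $$ (i,l) * B $$ (l,j))"
  using assms by (simp add: scalar_prod_def atLeast0LessThan row_def col_def)

lemma msum_carrier[simp]: "msum N S f \<in> DD N"
  by (simp add: msum_def)
lemma dim_msum[simp]: "dim_row (msum N S f) = dimH N" "dim_col (msum N S f) = dimH N"
  by (simp_all add: msum_def)
lemma msum_index[simp]: "i < dimH N \<Longrightarrow> j < dimH N \<Longrightarrow> msum N S f $$ (i,j) = (\<Sum>x\<in>S. f x $$ (i,j))"
  by (simp add: msum_def)

lemma msum_mult:
  assumes "finite S" "finite T" "\<And>x. x \<in> S \<Longrightarrow> f x \<in> DD N" "\<And>y. y \<in> T \<Longrightarrow> g y \<in> DD N"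
  shows "msum N S f * msum N T g = msum N (S \<times> T) (\<lambda>(x,y). f x * g y)"
proof (rule eq_matI)
  fix i k assume ik: "i < dim_row (msum N (S \<times> T) (\<lambda>(x,y). f x * g y))"
      "k < dim_col (msum N (S \<times> T) (\<lambda>(x,y). f x * g y))"
  hence i: "i < dimH N" and k: "k < dimH N" by auto
  have "(msum N S f * msum N T g) $$ (i,k) = (\<Sum>l<dimH N. (\<Sum>x\<in>S. f x $$ (i,l)) * (\<Sum>y\<in>T. g y $$ (l,k)))"
    using i k by (subst mult_index[of _ "dimH N"]) auto
  also have "\<dots> = (\<Sum>l<dimH N. \<Sum>x\<in>S. \<Sum>y\<in>T. f x $$ (i,l) * g y $$ (l,k))"
    by (simp add: sum_product)
  also have "\<dots> = (\<Sum>x\<in>S. \<Sum>y\<in>T. \<Sum>l<dimH N. f x $$ (i,l) * g y $$ (l,k))"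
    by (subst sum.swap, rule sum.cong, simp, rule sum.swap)
  also have "\<dots> = (\<Sum>x\<in>S. \<Sum>y\<in>T. (f x * g y) $$ (i,k))"
    using assms i k by (intro sum.cong refl) (simp add: mult_index[of _ "dimH N"])
  also have "\<dots> = (\<Sum>p\<in>S \<times> T. (case p of (x,y) \<Rightarrow> f x * g y) $$ (i,k))"
    by (auto simp: sum.cartesian_product intro!: sum.cong)
  also have "\<dots> = msum N (S \<times> T) (\<lambda>(x,y). f x * g y) $$ (i,k)"
    using i k by simp
  finally show "(msum N S f * msum N T g) $$ (i,k) = msum N (S \<times> T) (\<lambda>(x,y). f x * g y) $$ (i,k)" .
qed auto

lemma msum_add:
  assumes "\<And>x. x \<in> S \<Longrightarrow> f x \<in> DD N" "\<And>x. x \<in> S \<Longrightarrow> g x \<in> DD N"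
  shows "msum N S f + msum N S g = msum N S (\<lambda>x. f x + g x)"
proof (intro eq_matI)
  fix i j assume "i < dim_row (msum N S (\<lambda>x. f x + g x))" "j < dim_col (msum N S (\<lambda>x. f x + g x))"
  then show "(msum N S f + msum N S g) $$ (i, j) = msum N S (\<lambda>x. f x + g x) $$ (i, j)"
    using assms by (auto simp: sum.distrib[symmetric] intro!: sum.cong) (metis carrier_matD index_add_mat(1))
qed auto

lemma msum_minus:
  assumes "\<And>x. x \<in> S \<Longrightarrow> f x \<in> DD N" "\<And>x. x \<in> S \<Longrightarrow> g x \<in> DD N"
  shows "msum N S f - msum N S g = msum N S (\<lambda>x. f x - g x)"
proof (intro eq_matI)
  fix i j assume "i < dim_row (msum N S (\<lambda>x. f x - g x))" "j < dim_col (msum N S (\<lambda>x. f x - g x))"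
  then show "(msum N S f - msum N S g) $$ (i, j) = msum N S (\<lambda>x. f x - g x) $$ (i, j)"
    using assms by (auto simp: sum_subtractf[symmetric] intro!: sum.cong) (metis carrier_matD index_minus_mat(1))
qed auto

lemma msum_smult:
  assumes "\<And>x. x \<in> S \<Longrightarrow> f x \<in> DD N"
  shows "c \<cdot>\<^sub>m msum N S f = msum N S (\<lambda>x. c \<cdot>\<^sub>m f x)"
proof (intro eq_matI)
  fix i j assume "i < dim_row (msum N S (\<lambda>x. c \<cdot>\<^sub>m f x))" "j < dim_col (msum N S (\<lambda>x. c \<cdot>\<^sub>m f x))"
  then show "(c \<cdot>\<^sub>m msum N S f) $$ (i, j) = msum N S (\<lambda>x. c \<cdot>\<^sub>m f x) $$ (i, j)"
    using assms by (auto simp: sum_distrib_left intro!: sum.cong) (metis carrier_matD index_smult_mat(1))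
qed auto

lemma msum_scalar:
  assumes "M \<in> DD N"
  shows "msum N S (\<lambda>x. c x \<cdot>\<^sub>m M) = (\<Sum>x\<in>S. c x) \<cdot>\<^sub>m M"
  using assms by (intro eq_matI) (auto simp: sum_distrib_right)

lemma msum_cong:
  "S = T \<Longrightarrow> (\<And>x. x \<in> T \<Longrightarrow> f x = g x) \<Longrightarrow> msum N S f = msum N T g"
  unfolding msum_def by (auto intro!: sum.cong)

lemma msum_reindex:
  "inj_on h S \<Longrightarrow> msum N (h ` S) f = msum N S (\<lambda>x. f (h x))"
  unfolding msum_def by (simp add: sum.reindex)

lemma msum_mono_neutral:
  assumes "finite T" "S \<subseteq> T" "\<And>x. x \<in> T - S \<Longrightarrow> f x = 0\<^sub>m (dimH N) (dimH N)"
  shows "msum N S f = msum N T f"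
  unfolding msum_def
proof (intro cong_mat refl)
  fix i j assume "i < dimH N" "j < dimH N"
  then show "(\<Sum>x\<in>S. f x $$ (i, j)) = (\<Sum>x\<in>T. f x $$ (i, j))"
    using assms by (intro sum.mono_neutral_left) auto
qed

lemma msum_zero:
  assumes "\<And>x. x \<in> S \<Longrightarrow> f x = 0\<^sub>m (dimH N) (dimH N)"
  shows "msum N S f = 0\<^sub>m (dimH N) (dimH N)"
  using assms by (intro eq_matI) auto

lemma msum_swap:
  "msum N (S \<times> T) (\<lambda>(x,y). f x y) = msum N (T \<times> S) (\<lambda>(y,x). f x y)"
  unfolding msum_def
proof (intro cong_mat refl)
  fix i j
  have "(\<Sum>p\<in>S \<times> T. (case p of (x, y) \<Rightarrow> f x y) $$ (i, j)) = (\<Sum>x\<in>S. \<Sum>y\<in>T. f x y $$ (i,j))"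
    by (auto simp: sum.cartesian_product intro!: sum.cong)
  also have "\<dots> = (\<Sum>y\<in>T. \<Sum>x\<in>S. f x y $$ (i,j))" by (rule sum.swap)
  also have "\<dots> = (\<Sum>p\<in>T \<times> S. (case p of (y, x) \<Rightarrow> f x y) $$ (i, j))"
    by (auto simp: sum.cartesian_product intro!: sum.cong)
  finally show "(\<Sum>p\<in>S \<times> T. (case p of (x, y) \<Rightarrow> f x y) $$ (i, j)) = (\<Sum>p\<in>T \<times> S. (case p of (y, x) \<Rightarrow> f x y) $$ (i, j))" .
qed

definition opm :: "nat \<Rightarrow> (nat \<Rightarrow> bool) \<Rightarrow> (nat \<Rightarrow> nat) \<Rightarrow> (nat \<Rightarrow> complex) \<Rightarrow> complex mat" where
  "opm N P g ph = mat (dimH N) (dimH N) (\<lambda>(a,b). if P b \<and> a = g b then ph b else 0)"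

lemma opm_carrier[simp]: "opm N P g ph \<in> DD N"
  by (simp add: opm_def)

lemma opm_mult:
  assumes "\<And>b. b < dimH N \<Longrightarrow> P2 b \<Longrightarrow> g2 b < dimH N"
  shows "opm N P1 g1 f1 * opm N P2 g2 f2 =
         opm N (\<lambda>b. P2 b \<and> P1 (g2 b)) (\<lambda>b. g1 (g2 b)) (\<lambda>b. f1 (g2 b) * f2 b)"
proof (rule eq_matI)
  fix a c assume "a < dim_row (opm N (\<lambda>b. P2 b \<and> P1 (g2 b)) (\<lambda>b. g1 (g2 b)) (\<lambda>b. f1 (g2 b) * f2 b))"
    "c < dim_col (opm N (\<lambda>b. P2 b \<and> P1 (g2 b)) (\<lambda>b. g1 (g2 b)) (\<lambda>b. f1 (g2 b) * f2 b))"
  hence a: "a < dimH N" and c: "c < dimH N" by (auto simp: opm_def)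
  have "(opm N P1 g1 f1 * opm N P2 g2 f2) $$ (a,c) =
     (\<Sum>l<dimH N. (if P1 l \<and> a = g1 l then f1 l else 0) * (if P2 c \<and> l = g2 c then f2 c else 0))"
    using a c by (subst mult_index[of _ "dimH N"]) (auto simp: opm_def)
  also have "\<dots> = (if P2 c \<and> P1 (g2 c) \<and> a = g1 (g2 c) then f1 (g2 c) * f2 c else 0)"
  proof (cases "P2 c")
    case True
    have "(\<Sum>l<dimH N. (if P1 l \<and> a = g1 l then f1 l else 0) * (if P2 c \<and> l = g2 c then f2 c else 0))
       = (\<Sum>l<dimH N. if l = g2 c then (if P1 l \<and> a = g1 l then f1 l else 0) * f2 c else 0)"
      using True by (intro sum.cong) auto
    also have "\<dots> = (if P1 (g2 c) \<and> a = g1 (g2 c) then f1 (g2 c) else 0) * f2 c"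
      using assms[OF c True] by (subst sum.delta) auto
    finally show ?thesis using True by auto
  qed simp
  finally show "(opm N P1 g1 f1 * opm N P2 g2 f2) $$ (a,c) =
      opm N (\<lambda>b. P2 b \<and> P1 (g2 b)) (\<lambda>b. g1 (g2 b)) (\<lambda>b. f1 (g2 b) * f2 b) $$ (a,c)"
    using a c by (simp add: opm_def)
qed (auto simp: opm_def)

lemma opm_add_zero:
  assumes "\<And>b. b < dimH N \<Longrightarrow> P b \<longleftrightarrow> P' b"
    "\<And>b. b < dimH N \<Longrightarrow> P b \<Longrightarrow> g b = g' b \<and> f' b = - f b"
  shows "opm N P g f + opm N P' g' f' = 0\<^sub>m (dimH N) (dimH N)"
  using assms by (intro eq_matI) (auto simp: opm_def)

lemma opm_add_one:
  assumes "\<And>b. b < dimH N \<Longrightarrow> P b \<noteq> P' b"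
    "\<And>b. b < dimH N \<Longrightarrow> P b \<Longrightarrow> g b = b \<and> f b = 1"
    "\<And>b. b < dimH N \<Longrightarrow> P' b \<Longrightarrow> g' b = b \<and> f' b = 1"
  shows "opm N P g f + opm N P' g' f' = 1\<^sub>m (dimH N)"
proof (rule eq_matI)
  fix a c assume "a < dim_row (1\<^sub>m (dimH N))" "c < dim_col (1\<^sub>m (dimH N))"
  hence a: "a < dimH N" and c: "c < dimH N" by auto
  show "(opm N P g f + opm N P' g' f') $$ (a,c) = 1\<^sub>m (dimH N) $$ (a,c)"
    using a c assms[of c] by (cases "P c") (auto simp: opm_def)
qed (auto simp: opm_def)


unbundle bit_operations_syntax

lemma bit_add_pow:
  assumes "\<not> bit (b::nat) k"
  shows "bit (b + 2^k) n \<longleftrightarrow> (n = k \<or> bit b n)"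
proof -
  have "b + 2^k = b OR 2^k"
    by (rule disjunctive_add) (use assms in \<open>auto simp: bit_exp_iff\<close>)
  then show ?thesis by (auto simp: bit_or_iff bit_exp_iff)
qed

lemma add_pow_less:
  assumes "(b::nat) < 2^N" "k < N" "\<not> bit b k"
  shows "b + 2^k < 2^N"
proof -
  have e: "b + 2^k = b OR 2^k"
    by (rule disjunctive_add) (use assms in \<open>auto simp: bit_exp_iff\<close>)
  have "take_bit N (b OR 2^k) = take_bit N b OR take_bit N (2^k)" by simp
  also have "\<dots> = b OR 2^k"
  proof -
    have "take_bit N b = b" using assms(1) by (simp add: take_bit_nat_eq_self_iff)
    moreover have "take_bit N (2^k) = (2::nat)^k" using assms(2) by (simp add: take_bit_nat_eq_self_iff)
    ultimately show ?thesis by simp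
  qed
  finally show ?thesis unfolding e by (metis take_bit_nat_eq_self_iff)
qed

lemma bit_le_pow: assumes "bit (b::nat) k" shows "2^k \<le> b"
proof (rule ccontr)
  assume "\<not> 2^k \<le> b" then have z: "b div 2^k = 0" by simp
  have "odd (b div 2^k)" using assms bit_iff_odd by blast
  then show False unfolding z by simp
qed

lemma sub_pow_bits:
  assumes "bit (b::nat) k"
  shows "\<not> bit (b - 2^k) k" "b - 2^k + 2^k = b"
proof -
  have le: "2^k \<le> b" by (rule bit_le_pow[OF assms])
  then show e: "b - 2^k + 2^k = b" by simp
  have "b div 2^k = (b - 2^k) div 2^k + 1"
  proof -
    have "b div 2^k = (b - 2^k + 1 * 2^k) div 2^k" using e by simp
    also have "\<dots> = (b - 2^k) div 2^k + 1" by (subst div_mult_self1) auto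
    finally show ?thesis .
  qed
  then show "\<not> bit (b - 2^k) k" using assms by (simp add: bit_iff_odd)
qed

lemma bit_sub_pow:
  assumes "bit (b::nat) k"
  shows "bit (b - 2^k) n \<longleftrightarrow> (n \<noteq> k \<and> bit b n)"
  using bit_add_pow[OF sub_pow_bits(1)[OF assms], of n] sub_pow_bits(2)[OF assms]
    sub_pow_bits(1)[OF assms] by auto

definition ee :: "nat \<Rightarrow> nat \<Rightarrow> int" where
  "ee j b = (\<Sum>l\<in>{1..<j}. sz_val b l)"

lemma ee_shift:
  assumes "\<not> bit (b::nat) k"
  shows "ee j (b + 2^k) = ee j b + (if k + 1 < j then 2 else 0)"
proof -
  have "\<And>l. l \<in> {1..<j} \<Longrightarrow> sz_val (b + 2^k) l = sz_val b l + (if l = k + 1 then 2 else 0)"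
    using assms by (auto simp: sz_val_def bit_add_pow)
  then have "ee j (b + 2^k) = (\<Sum>l\<in>{1..<j}. sz_val b l + (if l = k + 1 then 2 else 0))"
    unfolding ee_def by (rule sum.cong[OF refl])
  also have "\<dots> = ee j b + (if k + 1 < j then 2 else 0)"
    by (simp add: sum.distrib ee_def)
  finally show ?thesis .
qed

lemma ee_shift_sub:
  assumes "bit (b::nat) k"
  shows "ee j (b - 2^k) = ee j b - (if k + 1 < j then 2 else 0)"
  using ee_shift[OF sub_pow_bits(1)[OF assms], of j] sub_pow_bits(2)[OF assms] by simp

lemma ipow_mult: "\<i> powi a * \<i> powi b = \<i> powi (a + b)"
  by (simp add: power_int_add)

lemma ipow_neg2: "a = b + 2 \<or> b = a + 2 \<Longrightarrow> \<i> powi a = - (\<i> powi b)"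
  by (auto simp: power_int_add)

lemma ipow_zero: "a = 0 \<Longrightarrow> \<i> powi a = 1" by simp


lemma cdag_opm:
  assumes "1 \<le> j"
  shows "cdag N j = opm N (\<lambda>b. \<not> bit b (j-1)) (\<lambda>b. b + 2^(j-1)) (\<lambda>b. \<i> powi (int j - 1 + ee j b))"
proof (rule eq_matI)
  fix a b assume "a < dim_row (opm N (\<lambda>b. \<not> bit b (j-1)) (\<lambda>b. b + 2^(j-1)) (\<lambda>b. \<i> powi (int j - 1 + ee j b)))"
    "b < dim_col (opm N (\<lambda>b. \<not> bit b (j-1)) (\<lambda>b. b + 2^(j-1)) (\<lambda>b. \<i> powi (int j - 1 + ee j b)))"
  hence a: "a < dimH N" and b: "b < dimH N" by (auto simp: opm_def)
  have "(jw_string 1 N j * sigma_plus N j) $$ (a,b) =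
    (\<Sum>l<dimH N. (if a = l then \<i> powi (1 * sum (sz_val a) {1..<j}) else 0) *
        (if \<not> bit b (j - 1) \<and> l = b + 2 ^ (j - 1) then 1 else 0))"
    using a b by (subst mult_index[of _ "dimH N"]) (auto simp: jw_string_def sigma_plus_def ee_def)
  also have "\<dots> = (\<Sum>l<dimH N. if l = a then (\<i> powi (ee j a)) *
        (if \<not> bit b (j - 1) \<and> a = b + 2 ^ (j - 1) then 1 else 0) else 0)"
    by (intro sum.cong) (auto simp: ee_def)
  also have "\<dots> = \<i> powi (ee j a) * (if \<not> bit b (j - 1) \<and> a = b + 2 ^ (j - 1) then 1 else 0)"
    using a by simp
  finally have *: "(jw_string 1 N j * sigma_plus N j) $$ (a,b) = \<dots>" .
  show "cdag N j $$ (a,b) = opm N (\<lambda>b. \<not> bit b (j-1)) (\<lambda>b. b + 2^(j-1)) (\<lambda>b. \<i> powi (int j - 1 + ee j b)) $$ (a,b)"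
    using a b * assms ee_shift[of b "j-1" j]
    by (auto simp: cdag_def opm_def jw_string_def sigma_plus_def ipow_mult)
qed (auto simp: opm_def cdag_def jw_string_def sigma_plus_def)

lemma cann_opm:
  assumes "1 \<le> j"
  shows "cann N j = opm N (\<lambda>b. bit b (j-1)) (\<lambda>b. b - 2^(j-1)) (\<lambda>b. \<i> powi (- (int j - 1) - ee j b))"
proof (rule eq_matI)
  fix a b assume "a < dim_row (opm N (\<lambda>b. bit b (j-1)) (\<lambda>b. b - 2^(j-1)) (\<lambda>b. \<i> powi (- (int j - 1) - ee j b)))"
    "b < dim_col (opm N (\<lambda>b. bit b (j-1)) (\<lambda>b. b - 2^(j-1)) (\<lambda>b. \<i> powi (- (int j - 1) - ee j b)))"
  hence a: "a < dimH N" and b: "b < dimH N" by (auto simp: opm_def)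
  have "(jw_string (-1) N j * sigma_minus N j) $$ (a,b) =
    (\<Sum>l<dimH N. (if a = l then \<i> powi (- 1 * sum (sz_val a) {1..<j}) else 0) *
        (if bit b (j - 1) \<and> l + 2 ^ (j - 1) = b then 1 else 0))"
    using a b by (subst mult_index[of _ "dimH N"]) (auto simp: jw_string_def sigma_minus_def ee_def)
  also have "\<dots> = (\<Sum>l<dimH N. if l = a then (\<i> powi (- ee j a)) *
        (if bit b (j - 1) \<and> a + 2 ^ (j - 1) = b then 1 else 0) else 0)"
    by (intro sum.cong) (auto simp: ee_def)
  also have "\<dots> = \<i> powi (- ee j a) * (if bit b (j - 1) \<and> a + 2 ^ (j - 1) = b then 1 else 0)"
    using a by simp
  finally have *: "(jw_string (-1) N j * sigma_minus N j) $$ (a,b) = \<dots>" .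
  have **: "bit b (j - 1) \<and> a + 2 ^ (j - 1) = b \<longleftrightarrow> bit b (j - 1) \<and> a = b - 2 ^ (j - 1)"
    using bit_le_pow[of b "j-1"] by auto
  show "cann N j $$ (a,b) = opm N (\<lambda>b. bit b (j-1)) (\<lambda>b. b - 2^(j-1)) (\<lambda>b. \<i> powi (- (int j - 1) - ee j b)) $$ (a,b)"
    using a b * ** assms ee_shift_sub[of b "j-1" j]
    by (auto simp: cann_def opm_def jw_string_def sigma_minus_def ipow_mult)
qed (auto simp: opm_def cann_def jw_string_def sigma_minus_def)


lemma lt_add_pow: "b < dimH N \<Longrightarrow> m < N \<Longrightarrow> \<not> bit b m \<Longrightarrow> b + 2^m < dimH N"
  using add_pow_less by (simp add: dimH_def)

lemma cdag_anti:
  assumes "1 \<le> j" "j \<le> N" "1 \<le> k" "k \<le> N"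
  shows "cdag N j * cdag N k + cdag N k * cdag N j = 0\<^sub>m (dimH N) (dimH N)"
  unfolding cdag_opm[OF assms(1)] cdag_opm[OF assms(3)]
proof (subst (1 2) opm_mult)
  show "\<And>b. b < dimH N \<Longrightarrow> \<not> bit b (j - 1) \<Longrightarrow> b + 2 ^ (j - 1) < dimH N"
    using assms lt_add_pow by auto
  show "\<And>b. b < dimH N \<Longrightarrow> \<not> bit b (k - 1) \<Longrightarrow> b + 2 ^ (k - 1) < dimH N"
    using assms lt_add_pow by auto
  show "opm N (\<lambda>b. \<not> bit b (k - 1) \<and> \<not> bit (b + 2 ^ (k - 1)) (j - 1)) (\<lambda>b. b + 2 ^ (k - 1) + 2 ^ (j - 1))
     (\<lambda>b. \<i> powi (int j - 1 + ee j (b + 2 ^ (k - 1))) * \<i> powi (int k - 1 + ee k b)) +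
    opm N (\<lambda>b. \<not> bit b (j - 1) \<and> \<not> bit (b + 2 ^ (j - 1)) (k - 1)) (\<lambda>b. b + 2 ^ (j - 1) + 2 ^ (k - 1))
     (\<lambda>b. \<i> powi (int k - 1 + ee k (b + 2 ^ (j - 1))) * \<i> powi (int j - 1 + ee j b)) =
    0\<^sub>m (dimH N) (dimH N)"
  proof (rule opm_add_zero)
    fix b assume "b < dimH N"
    show "(\<not> bit b (k - 1) \<and> \<not> bit (b + 2 ^ (k - 1)) (j - 1)) = (\<not> bit b (j - 1) \<and> \<not> bit (b + 2 ^ (j - 1)) (k - 1))"
      by (auto simp: bit_add_pow)
  next
    fix b assume "b < dimH N" and P: "\<not> bit b (k - 1) \<and> \<not> bit (b + 2 ^ (k - 1)) (j - 1)"
    then have nb: "\<not> bit b (j-1)" "\<not> bit b (k-1)" and jk: "j - 1 \<noteq> k - 1"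
      by (auto simp: bit_add_pow)
    show "b + 2 ^ (k - 1) + 2 ^ (j - 1) = b + 2 ^ (j - 1) + 2 ^ (k - 1) \<and>
       \<i> powi (int k - 1 + ee k (b + 2 ^ (j - 1))) * \<i> powi (int j - 1 + ee j b) =
       - (\<i> powi (int j - 1 + ee j (b + 2 ^ (k - 1))) * \<i> powi (int k - 1 + ee k b))"
      using ee_shift[OF nb(1), of k] ee_shift[OF nb(2), of j] jk assms
      by (auto simp: ipow_mult intro!: ipow_neg2)
  qed
qed

lemma cann_anti:
  assumes "1 \<le> j" "j \<le> N" "1 \<le> k" "k \<le> N"
  shows "cann N j * cann N k + cann N k * cann N j = 0\<^sub>m (dimH N) (dimH N)"
  unfolding cann_opm[OF assms(1)] cann_opm[OF assms(3)]
proof (subst (1 2) opm_mult)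
  show "\<And>b. b < dimH N \<Longrightarrow> bit b (j - 1) \<Longrightarrow> b - 2 ^ (j - 1) < dimH N" by auto
  show "\<And>b. b < dimH N \<Longrightarrow> bit b (k - 1) \<Longrightarrow> b - 2 ^ (k - 1) < dimH N" by auto
  show "opm N (\<lambda>b. bit b (k - 1) \<and> bit (b - 2 ^ (k - 1)) (j - 1)) (\<lambda>b. b - 2 ^ (k - 1) - 2 ^ (j - 1))
     (\<lambda>b. \<i> powi (- (int j - 1) - ee j (b - 2 ^ (k - 1))) * \<i> powi (- (int k - 1) - ee k b)) +
    opm N (\<lambda>b. bit b (j - 1) \<and> bit (b - 2 ^ (j - 1)) (k - 1)) (\<lambda>b. b - 2 ^ (j - 1) - 2 ^ (k - 1))
     (\<lambda>b. \<i> powi (- (int k - 1) - ee k (b - 2 ^ (j - 1))) * \<i> powi (- (int j - 1) - ee j b)) =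
    0\<^sub>m (dimH N) (dimH N)"
  proof (rule opm_add_zero)
    fix b assume "b < dimH N"
    show "(bit b (k - 1) \<and> bit (b - 2 ^ (k - 1)) (j - 1)) = (bit b (j - 1) \<and> bit (b - 2 ^ (j - 1)) (k - 1))"
      by (auto simp: bit_sub_pow)
  next
    fix b assume "b < dimH N" and P: "bit b (k - 1) \<and> bit (b - 2 ^ (k - 1)) (j - 1)"
    then have nb: "bit b (j-1)" "bit b (k-1)" and jk: "j - 1 \<noteq> k - 1"
      by (auto simp: bit_sub_pow)
    show "b - 2 ^ (k - 1) - 2 ^ (j - 1) = b - 2 ^ (j - 1) - 2 ^ (k - 1) \<and>
       \<i> powi (- (int k - 1) - ee k (b - 2 ^ (j - 1))) * \<i> powi (- (int j - 1) - ee j b) =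
       - (\<i> powi (- (int j - 1) - ee j (b - 2 ^ (k - 1))) * \<i> powi (- (int k - 1) - ee k b))"
      using ee_shift_sub[OF nb(1), of k] ee_shift_sub[OF nb(2), of j] jk assms
      by (auto simp: ipow_mult add.commute intro!: ipow_neg2)
  qed
qed

lemma cann_cdag_anti:
  assumes "1 \<le> j" "j \<le> N" "1 \<le> k" "k \<le> N"
  shows "cann N j * cdag N k + cdag N k * cann N j = (if j = k then 1\<^sub>m (dimH N) else 0\<^sub>m (dimH N) (dimH N))"
  unfolding cann_opm[OF assms(1)] cdag_opm[OF assms(3)]
proof (subst (1 2) opm_mult)
  show "\<And>b. b < dimH N \<Longrightarrow> bit b (j - 1) \<Longrightarrow> b - 2 ^ (j - 1) < dimH N" by auto
  show "\<And>b. b < dimH N \<Longrightarrow> \<not> bit b (k - 1) \<Longrightarrow> b + 2 ^ (k - 1) < dimH N"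
    using assms lt_add_pow by auto
  show "opm N (\<lambda>b. \<not> bit b (k - 1) \<and> bit (b + 2 ^ (k - 1)) (j - 1)) (\<lambda>b. b + 2 ^ (k - 1) - 2 ^ (j - 1))
     (\<lambda>b. \<i> powi (- (int j - 1) - ee j (b + 2 ^ (k - 1))) * \<i> powi (int k - 1 + ee k b)) +
    opm N (\<lambda>b. bit b (j - 1) \<and> \<not> bit (b - 2 ^ (j - 1)) (k - 1)) (\<lambda>b. b - 2 ^ (j - 1) + 2 ^ (k - 1))
     (\<lambda>b. \<i> powi (int k - 1 + ee k (b - 2 ^ (j - 1))) * \<i> powi (- (int j - 1) - ee j b)) =
    (if j = k then 1\<^sub>m (dimH N) else 0\<^sub>m (dimH N) (dimH N))"
  proof (cases "j = k")
    case False
    then have jk: "j - 1 \<noteq> k - 1" using assms by auto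
    show ?thesis unfolding if_not_P[OF False]
    proof (rule opm_add_zero)
      fix b assume "b < dimH N"
      show "(\<not> bit b (k - 1) \<and> bit (b + 2 ^ (k - 1)) (j - 1)) = (bit b (j - 1) \<and> \<not> bit (b - 2 ^ (j - 1)) (k - 1))"
        using jk by (auto simp: bit_sub_pow bit_add_pow)
    next
      fix b assume "b < dimH N" and P: "\<not> bit b (k - 1) \<and> bit (b + 2 ^ (k - 1)) (j - 1)"
      then have nb: "bit b (j-1)" "\<not> bit b (k-1)"
        using jk by (auto simp: bit_add_pow)
      have le: "2^(j-1) \<le> b" using bit_le_pow[OF nb(1)] .
      show "b + 2 ^ (k - 1) - 2 ^ (j - 1) = b - 2 ^ (j - 1) + 2 ^ (k - 1) \<and>
         \<i> powi (int k - 1 + ee k (b - 2 ^ (j - 1))) * \<i> powi (- (int j - 1) - ee j b) =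
         - (\<i> powi (- (int j - 1) - ee j (b + 2 ^ (k - 1))) * \<i> powi (int k - 1 + ee k b))"
        using ee_shift_sub[OF nb(1), of k] ee_shift[OF nb(2), of j] jk assms le
        by (auto simp: ipow_mult intro!: ipow_neg2)
    qed
  next
    case True
    show ?thesis unfolding True if_P[OF refl]
    proof (rule opm_add_one)
      fix b assume "b < dimH N"
      show "(\<not> bit b (k - 1) \<and> bit (b + 2 ^ (k - 1)) (k - 1)) \<noteq> (bit b (k - 1) \<and> \<not> bit (b - 2 ^ (k - 1)) (k - 1))"
        by (auto simp: bit_sub_pow bit_add_pow)
    next
      fix b assume "b < dimH N" and P: "\<not> bit b (k - 1) \<and> bit (b + 2 ^ (k - 1)) (k - 1)"
      then have nb: "\<not> bit b (k-1)" by auto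
      show "b + 2 ^ (k - 1) - 2 ^ (k - 1) = b \<and>
        \<i> powi (- (int k - 1) - ee k (b + 2 ^ (k - 1))) * \<i> powi (int k - 1 + ee k b) = 1"
        using ee_shift[OF nb, of k] assms by (auto simp: ipow_mult)
    next
      fix b assume "b < dimH N" and P: "bit b (k - 1) \<and> \<not> bit (b - 2 ^ (k - 1)) (k - 1)"
      then have nb: "bit b (k-1)" by auto
      have le: "2^(k-1) \<le> b" using bit_le_pow[OF nb] .
      show "b - 2 ^ (k - 1) + 2 ^ (k - 1) = b \<and>
        \<i> powi (int k - 1 + ee k (b - 2 ^ (k - 1))) * \<i> powi (- (int k - 1) - ee k b) = 1"
        using ee_shift_sub[OF nb, of k] assms le by (auto simp: ipow_mult)
    qed
  qed
qed


lemma mult_DD[simp]: "A \<in> carrier_mat n n \<Longrightarrow> B \<in> carrier_mat n n \<Longrightarrow> A * B \<in> carrier_mat n n"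
  by (rule mult_carrier_mat)

lemma smult_smult_m: "a \<cdot>\<^sub>m (b \<cdot>\<^sub>m (A::complex mat)) = (a * b) \<cdot>\<^sub>m A"
  by (rule eq_matI) auto

lemma cdag_carrier[simp]: "cdag N j \<in> DD N"
  unfolding cdag_def jw_string_def sigma_plus_def by (rule smult_carrier_mat, rule mult_carrier_mat[of _ _ "dimH N"]) (rule mat_carrier)+
lemma cann_carrier[simp]: "cann N j \<in> DD N"
  unfolding cann_def jw_string_def sigma_minus_def by (rule smult_carrier_mat, rule mult_carrier_mat[of _ _ "dimH N"]) (rule mat_carrier)+

lemma smult_mult_DD:
  assumes "A \<in> DD N" "B \<in> DD N"
  shows "(a \<cdot>\<^sub>m A) * B = (a::complex) \<cdot>\<^sub>m (A * B)" "A * (a \<cdot>\<^sub>m B) = a \<cdot>\<^sub>m (A * B)"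
    "a \<cdot>\<^sub>m A + a \<cdot>\<^sub>m B = a \<cdot>\<^sub>m (A + B)"
proof -
  show "(a \<cdot>\<^sub>m A) * B = a \<cdot>\<^sub>m (A * B)" using assms by (rule mult_smult_assoc_mat)
  show "A * (a \<cdot>\<^sub>m B) = a \<cdot>\<^sub>m (A * B)" using assms by (rule mult_smult_distrib)
  show "a \<cdot>\<^sub>m A + a \<cdot>\<^sub>m B = a \<cdot>\<^sub>m (A + B)" using assms by (rule add_smult_distrib_left_mat[symmetric])
qed

lemma msum_anti:
  assumes fin: "finite S" "finite T"
    and X: "\<And>x. x \<in> S \<Longrightarrow> X x \<in> DD N" and Y: "\<And>y. y \<in> T \<Longrightarrow> Y y \<in> DD N"
  shows "msum N S (\<lambda>x. a x \<cdot>\<^sub>m X x) * msum N T (\<lambda>y. b y \<cdot>\<^sub>m Y y)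
       + msum N T (\<lambda>y. b y \<cdot>\<^sub>m Y y) * msum N S (\<lambda>x. a x \<cdot>\<^sub>m X x)
       = msum N (S \<times> T) (\<lambda>(x,y). (a x * b y) \<cdot>\<^sub>m (X x * Y y + Y y * X x))"
proof -
  have "msum N S (\<lambda>x. a x \<cdot>\<^sub>m X x) * msum N T (\<lambda>y. b y \<cdot>\<^sub>m Y y)
      = msum N (S \<times> T) (\<lambda>(x,y). (a x \<cdot>\<^sub>m X x) * (b y \<cdot>\<^sub>m Y y))"
    using assms by (intro msum_mult) auto
  moreover have "msum N T (\<lambda>y. b y \<cdot>\<^sub>m Y y) * msum N S (\<lambda>x. a x \<cdot>\<^sub>m X x)
      = msum N (T \<times> S) (\<lambda>(y,x). (b y \<cdot>\<^sub>m Y y) * (a x \<cdot>\<^sub>m X x))"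
    using assms by (intro msum_mult) auto
  moreover have "\<dots> = msum N (S \<times> T) (\<lambda>(x,y). (b y \<cdot>\<^sub>m Y y) * (a x \<cdot>\<^sub>m X x))"
    by (rule msum_swap[symmetric])
  ultimately have "msum N S (\<lambda>x. a x \<cdot>\<^sub>m X x) * msum N T (\<lambda>y. b y \<cdot>\<^sub>m Y y)
       + msum N T (\<lambda>y. b y \<cdot>\<^sub>m Y y) * msum N S (\<lambda>x. a x \<cdot>\<^sub>m X x)
       = msum N (S \<times> T) (\<lambda>p. (case p of (x,y) \<Rightarrow> (a x \<cdot>\<^sub>m X x) * (b y \<cdot>\<^sub>m Y y))
            + (case p of (x,y) \<Rightarrow> (b y \<cdot>\<^sub>m Y y) * (a x \<cdot>\<^sub>m X x)))"
    using assms by (simp only:) (rule msum_add, auto)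
  also have "\<dots> = msum N (S \<times> T) (\<lambda>(x,y). (a x * b y) \<cdot>\<^sub>m (X x * Y y + Y y * X x))"
  proof (rule msum_cong[OF refl], clarify)
    fix x y assume "x \<in> S" "y \<in> T"
    then have c: "X x \<in> DD N" "Y y \<in> DD N" using assms by auto
    show "(a x \<cdot>\<^sub>m X x) * (b y \<cdot>\<^sub>m Y y) + (b y \<cdot>\<^sub>m Y y) * (a x \<cdot>\<^sub>m X x) =
          (a x * b y) \<cdot>\<^sub>m (X x * Y y + Y y * X x)"
      using c by (simp add: smult_mult_DD[where N=N] smult_smult_m mult.commute)
  qed
  finally show ?thesis .
qed

lemma sum_pair_delta:
  "finite S \<Longrightarrow> (\<Sum>p\<in>S \<times> S. (case p of (x,y) \<Rightarrow> if x = y then f x else 0)) = (\<Sum>x\<in>S. (f x :: complex))"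
  by (simp add: sum.cartesian_product[symmetric])

definition Gm :: "nat \<Rightarrow> nat \<Rightarrow> nat \<Rightarrow> complex" where
  "Gm N l k = - \<i> * (\<Sum>j\<in>{1..N}. Acoef N l j * Acoef N k j)"

lemma thetadag_carrier[simp]: "thetadag N l \<in> DD N" by (simp add: thetadag_def)
lemma theta_carrier[simp]: "theta N l \<in> DD N" by (simp add: theta_def)

lemma TT_anti: "thetadag N l * thetadag N k + thetadag N k * thetadag N l = 0\<^sub>m (dimH N) (dimH N)"
proof -
  have "thetadag N l * thetadag N k + thetadag N k * thetadag N l =
     msum N ({1..N} \<times> {1..N}) (\<lambda>(x,y). (Acoef N l x * Acoef N k y) \<cdot>\<^sub>m (cdag N x * cdag N y + cdag N y * cdag N x))"
    unfolding thetadag_def by (rule msum_anti) auto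
  also have "\<dots> = 0\<^sub>m (dimH N) (dimH N)"
    by (rule msum_zero) (auto simp: cdag_anti)
  finally show ?thesis .
qed

lemma SS_anti: "theta N l * theta N k + theta N k * theta N l = 0\<^sub>m (dimH N) (dimH N)"
proof -
  have "theta N l * theta N k + theta N k * theta N l =
     (-\<i> * -\<i>) \<cdot>\<^sub>m (msum N {1..N} (\<lambda>j. Acoef N l j \<cdot>\<^sub>m cann N j) * msum N {1..N} (\<lambda>j. Acoef N k j \<cdot>\<^sub>m cann N j)
      + msum N {1..N} (\<lambda>j. Acoef N k j \<cdot>\<^sub>m cann N j) * msum N {1..N} (\<lambda>j. Acoef N l j \<cdot>\<^sub>m cann N j))"
    unfolding theta_def
    by (simp add: smult_mult_DD[where N=N] smult_smult_m)
  also have "msum N {1..N} (\<lambda>j. Acoef N l j \<cdot>\<^sub>m cann N j) * msum N {1..N} (\<lambda>j. Acoef N k j \<cdot>\<^sub>m cann N j)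
      + msum N {1..N} (\<lambda>j. Acoef N k j \<cdot>\<^sub>m cann N j) * msum N {1..N} (\<lambda>j. Acoef N l j \<cdot>\<^sub>m cann N j) =
     msum N ({1..N} \<times> {1..N}) (\<lambda>(x,y). (Acoef N l x * Acoef N k y) \<cdot>\<^sub>m (cann N x * cann N y + cann N y * cann N x))"
    by (rule msum_anti) auto
  also have "\<dots> = 0\<^sub>m (dimH N) (dimH N)"
    by (rule msum_zero) (auto simp: cann_anti)
  finally show ?thesis by simp
qed

lemma ST_anti: "theta N l * thetadag N k + thetadag N k * theta N l = Gm N l k \<cdot>\<^sub>m 1\<^sub>m (dimH N)"
proof -
  have "theta N l * thetadag N k + thetadag N k * theta N l =
     (-\<i>) \<cdot>\<^sub>m (msum N {1..N} (\<lambda>j. Acoef N l j \<cdot>\<^sub>m cann N j) * thetadag N k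
      + thetadag N k * msum N {1..N} (\<lambda>j. Acoef N l j \<cdot>\<^sub>m cann N j))"
    unfolding theta_def
    by (simp add: smult_mult_DD[where N=N])
  also have "msum N {1..N} (\<lambda>j. Acoef N l j \<cdot>\<^sub>m cann N j) * thetadag N k
      + thetadag N k * msum N {1..N} (\<lambda>j. Acoef N l j \<cdot>\<^sub>m cann N j) =
     msum N ({1..N} \<times> {1..N}) (\<lambda>(x,y). (Acoef N l x * Acoef N k y) \<cdot>\<^sub>m (cann N x * cdag N y + cdag N y * cann N x))"
    unfolding thetadag_def by (rule msum_anti) auto
  also have "\<dots> = msum N ({1..N} \<times> {1..N}) (\<lambda>(x,y). (if x = y then Acoef N l x * Acoef N k x else 0) \<cdot>\<^sub>m 1\<^sub>m (dimH N))"
    by (rule msum_cong) (auto simp: cann_cdag_anti)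
  also have "\<dots> = (\<Sum>p\<in>{1..N} \<times> {1..N}. (case p of (x,y) \<Rightarrow> if x = y then Acoef N l x * Acoef N k x else 0)) \<cdot>\<^sub>m 1\<^sub>m (dimH N)"
    by (subst msum_scalar[symmetric]) (auto intro!: msum_cong)
  also have "\<dots> = (\<Sum>x\<in>{1..N}. Acoef N l x * Acoef N k x) \<cdot>\<^sub>m 1\<^sub>m (dimH N)"
    by (subst sum_pair_delta) auto
  finally show ?thesis by (simp add: smult_smult_m Gm_def)
qed


lemma cis_ne1:
  assumes "0 < \<bar>t\<bar>" "\<bar>t\<bar> < 2 * pi"
  shows "cis t \<noteq> 1"
proof
  assume "cis t = 1"
  then have "Re (cis t) = 1" by simp
  then have "cos t = 1" by simp
  then obtain n :: int where n: "t = real_of_int n * 2 * pi" using cos_one_2pi_int by blast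
  then have "\<bar>real_of_int n\<bar> * (2 * pi) < 2 * pi" using assms(2) by (simp add: abs_mult)
  then have "\<bar>real_of_int n\<bar> < 1" by simp
  then have "n = 0" by linarith
  then show False using n assms(1) by simp
qed

lemma cis_pow_N:
  assumes "N > 0"
  shows "cis (pi * real l / real N) ^ N = (-1) ^ l"
proof -
  have "cis (pi * real l / real N) ^ N = cis (real N * (pi * real l / real N))" by (rule DeMoivre)
  also have "real N * (pi * real l / real N) = real l * pi" using assms by simp
  also have "cis (real l * pi) = cis pi ^ l" by (rule DeMoivre[symmetric])
  finally show ?thesis by simp
qed

lemma Acoef_pow:
  "Acoef N k j = (1/2) * (1 + \<i> * inverse (cis (pi * k / N))) * (cis (pi * k / N)) ^ j
               - (1/2) * (1 + \<i> * cis (pi * k / N)) * (inverse (cis (pi * k / N))) ^ j"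
proof -
  have "cis (pi * real k * real j / real N) = cis (pi * k / N) ^ j"
    by (simp add: DeMoivre mult_ac)
  moreover have "cis (- pi * real k * real j / real N) = (inverse (cis (pi * k / N))) ^ j"
    by (simp add: DeMoivre mult_ac)
  moreover have "cis (- pi * real k / real N) = inverse (cis (pi * k / N))" by simp
  ultimately show ?thesis unfolding Acoef_def by simp
qed

lemma geo_sum:
  fixes z :: complex
  assumes "z \<noteq> 1"
  shows "(\<Sum>j\<in>{1..N}. z ^ j) = z * (z ^ N - 1) / (z - 1)"
proof -
  have "z - 1 \<noteq> 0" "1 - z \<noteq> 0" using assms by auto
  then show ?thesis
    by (cases "N = 0") (auto simp: sum_gp field_simps)
qed

lemma sum_four:
  fixes a b c d x y :: complex
  shows "(\<Sum>j\<in>{1..N}. (a * x ^ j - b * (inverse x) ^ j) * (c * y ^ j - d * (inverse y) ^ j)) =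
    a * c * (\<Sum>j\<in>{1..N}. (x*y) ^ j) - a * d * (\<Sum>j\<in>{1..N}. (x * inverse y) ^ j)
    - b * c * (\<Sum>j\<in>{1..N}. (inverse x * y) ^ j) + b * d * (\<Sum>j\<in>{1..N}. (inverse x * inverse y) ^ j)"
  by (simp add: algebra_simps sum.distrib sum_subtractf sum_distrib_left power_mult_distrib)


lemma alg_p1: "(x + \<i>)*(y+\<i>)*P - (1+\<i>*x)*(1+\<i>*y)*P = 2*(x*y-1)*(P::complex)" by (simp add: algebra_simps)
lemma alg_p2: "- ((x + \<i>) * (1 + \<i> * y) * Q) + (1 + \<i> * x) * (y + \<i>) * Q = 2*(y - x) * (Q::complex)" by (simp add: algebra_simps)

lemma key_alg:
  fixes x y s :: complex
  assumes "x \<noteq> 0" "y \<noteq> 0" "x * y \<noteq> 1" "x \<noteq> y"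
  shows "(1/2) * (1 + \<i> * inverse x) * ((1/2) * (1 + \<i> * inverse y)) * ((x*y) * (s - 1) / (x*y - 1))
     - (1/2) * (1 + \<i> * inverse x) * ((1/2) * (1 + \<i> * y)) * ((x * inverse y) * (s - 1) / (x * inverse y - 1))
     - (1/2) * (1 + \<i> * x) * ((1/2) * (1 + \<i> * inverse y)) * ((inverse x * y) * (s - 1) / (inverse x * y - 1))
     + (1/2) * (1 + \<i> * x) * ((1/2) * (1 + \<i> * y)) * ((inverse x * inverse y) * (s - 1) / (inverse x * inverse y - 1))
     = 0"
proof -
  have d1: "x * y - 1 \<noteq> 0" using assms by auto
  have d2: "x - y \<noteq> 0" using assms by auto
  define P where "P = (s - 1) / (x * y - 1)"
  define Q where "Q = (s - 1) / (x - y)"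
  have hP: "(x * y - 1) * P = s - 1" using d1 by (simp add: P_def)
  have hQ: "(x - y) * Q = s - 1" using d2 by (simp add: Q_def)
  have r1: "(x*y) * (s - 1) / (x*y - 1) = x * y * P" by (simp add: P_def)
  have r2: "(x * inverse y) * (s - 1) / (x * inverse y - 1) = x * Q"
    using assms d2 by (simp add: Q_def field_simps)
  have r3: "(inverse x * y) * (s - 1) / (inverse x * y - 1) = - y * Q"
    using assms d2 by (simp add: Q_def field_simps)
  have r4: "(inverse x * inverse y) * (s - 1) / (inverse x * inverse y - 1) = - P"
    using assms d1 by (simp add: P_def field_simps)
  have q1: "(1 + \<i>*inverse x)*(1+\<i>*inverse y)*(x*y*P) = (x+\<i>)*(y+\<i>)*P"
    using assms by (simp add: field_simps)
  have q2: "(1 + \<i>*inverse x)*(1+\<i>*y)*(x*Q) = (x+\<i>)*(1+\<i>*y)*Q"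
    using assms by (simp add: field_simps)
  have q3: "(1 + \<i>*x)*(1+\<i>*inverse y)*(y*Q) = (1+\<i>*x)*(y+\<i>)*Q"
    using assms by (simp add: field_simps)
  have "(1/2) * (1 + \<i> * inverse x) * ((1/2) * (1 + \<i> * inverse y)) * (x * y * P)
     - (1/2) * (1 + \<i> * inverse x) * ((1/2) * (1 + \<i> * y)) * (x * Q)
     - (1/2) * (1 + \<i> * x) * ((1/2) * (1 + \<i> * inverse y)) * (- y * Q)
     + (1/2) * (1 + \<i> * x) * ((1/2) * (1 + \<i> * y)) * (- P)
     = (1/4) * ((1 + \<i>*inverse x)*(1+\<i>*inverse y)*(x*y*P) - (1 + \<i>*inverse x)*(1+\<i>*y)*(x*Q)
          + (1 + \<i>*x)*(1+\<i>*inverse y)*(y*Q) - (1+\<i>*x)*(1+\<i>*y)*P)"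
    by (simp add: field_simps)
  also have "\<dots> = (1/4) * (((x + \<i>)*(y+\<i>)*P - (1+\<i>*x)*(1+\<i>*y)*P)
          + (- ((x + \<i>) * (1 + \<i> * y) * Q) + (1 + \<i> * x) * (y + \<i>) * Q))"
    by (subst q1, subst q2, subst q3) (simp add: algebra_simps)
  also have "\<dots> = (1/4) * (2*(x*y-1)*P + 2*(y - x) * Q)"
    unfolding alg_p1 alg_p2 ..
  also have "\<dots> = (1/2) * ((x*y-1)*P + (y - x) * Q)" by (simp add: algebra_simps)
  also have "(y - x) * Q = - (s - 1)" using hQ by (metis minus_diff_eq mult_minus_left)
  also have "(1/2) * ((x*y-1)*P + - (s - 1)) = 0" using hP by simp
  finally show ?thesis unfolding r1 r2 r3 r4 .
qed


lemma inv_m1_pow: "inverse ((-1::complex) ^ n) = (-1) ^ n"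
  by (induct n) (simp_all add: inverse_mult_distrib)

lemma cis_add_inv: "cis t + inverse (cis t) = complex_of_real (2 * cos t)"
  by (simp add: cis.ctr complex_eq_iff)

lemma cis_pow_N_neg:
  assumes "N > 0"
  shows "cis (- (pi * real l / real N)) ^ N = (-1) ^ l"
proof -
  have "cis (- (pi * real l / real N)) ^ N = inverse (cis (pi * real l / real N) ^ N)"
    by (simp add: power_inverse[symmetric])
  also have "\<dots> = (-1) ^ l" using cis_pow_N[OF assms, of l] inv_m1_pow by simp
  finally show ?thesis .
qed

lemma Gm_closed:
  assumes N: "0 < N" and lk: "1 \<le> l" "l < N" "1 \<le> k" "k < N"
  shows "Gm N l k = (if l = k then - complex_of_real (real N * cos (pi * real l / real N)) else 0)"
proof -
  define x where "x = cis (pi * real l / real N)"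
  define y where "y = cis (pi * real k / real N)"
  define s :: complex where "s = (-1) ^ (l + k)"
  have x0: "x \<noteq> 0" "y \<noteq> 0" by (auto simp: x_def y_def)
  have sumA: "(\<Sum>j\<in>{1..N}. Acoef N l j * Acoef N k j) =
     (1/2) * (1 + \<i> * inverse x) * ((1/2) * (1 + \<i> * inverse y)) * (\<Sum>j\<in>{1..N}. (x*y) ^ j)
     - (1/2) * (1 + \<i> * inverse x) * ((1/2) * (1 + \<i> * y)) * (\<Sum>j\<in>{1..N}. (x * inverse y) ^ j)
     - (1/2) * (1 + \<i> * x) * ((1/2) * (1 + \<i> * inverse y)) * (\<Sum>j\<in>{1..N}. (inverse x * y) ^ j)
     + (1/2) * (1 + \<i> * x) * ((1/2) * (1 + \<i> * y)) * (\<Sum>j\<in>{1..N}. (inverse x * inverse y) ^ j)"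
    unfolding Acoef_pow x_def y_def by (rule sum_four)
  have xyN: "(x * y) ^ N = s" using N
    by (simp add: x_def y_def s_def power_mult_distrib cis_pow_N power_add)
  have ixyN: "(inverse x * inverse y) ^ N = s"
  proof -
    have "(inverse x * inverse y) ^ N = inverse (x * y) ^ N" by simp
    also have "\<dots> = inverse ((x * y) ^ N)" by (rule power_inverse)
    finally have "(inverse x * inverse y) ^ N = inverse ((x * y) ^ N)" .
    then show ?thesis using xyN by (simp add: s_def inv_m1_pow)
  qed
  have xy1: "x * y \<noteq> 1"
  proof -
    have "x * y = cis (pi * real (l + k) / real N)" by (simp add: x_def y_def cis_mult add_divide_distrib algebra_simps)
    moreover have "cis (pi * real (l + k) / real N) \<noteq> 1"
    proof (rule cis_ne1)
      have "0 < pi * real (l + k) / real N" using N lk by simp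
      moreover have "pi * real (l + k) / real N < 2 * pi"
      proof -
        have "real (l + k) < 2 * real N" using lk by simp
        then have "pi * real (l + k) < pi * (2 * real N)" by simp
        then show ?thesis using N by (simp add: divide_less_eq mult_ac)
      qed
      ultimately show "0 < \<bar>pi * real (l + k) / real N\<bar>" "\<bar>pi * real (l + k) / real N\<bar> < 2 * pi" by auto
    qed
    ultimately show ?thesis by simp
  qed
  have ixy1: "inverse x * inverse y \<noteq> 1"
    using xy1 x0 by (metis inverse_1 inverse_inverse_eq inverse_mult_distrib)
  have S1: "(\<Sum>j\<in>{1..N}. (x*y) ^ j) = (x*y) * (s - 1) / (x*y - 1)"
    using geo_sum[OF xy1, of N] xyN by simp
  have S4: "(\<Sum>j\<in>{1..N}. (inverse x * inverse y) ^ j) = (inverse x * inverse y) * (s - 1) / (inverse x * inverse y - 1)"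
    using geo_sum[OF ixy1, of N] ixyN by simp
  show ?thesis
  proof (cases "l = k")
    case False
    have xiy: "x * inverse y = cis (pi * real l / real N - pi * real k / real N)"
      by (simp add: x_def y_def cis_mult)
    have xiy1: "x * inverse y \<noteq> 1"
    proof -
      have "cis (pi * real l / real N - pi * real k / real N) \<noteq> 1"
      proof (rule cis_ne1)
        have e: "pi * real l / real N - pi * real k / real N = pi * (real l - real k) / real N"
          by (simp add: diff_divide_distrib algebra_simps)
        have "real l \<noteq> real k" using False by simp
        then have "0 < \<bar>real l - real k\<bar>" by simp
        then show "0 < \<bar>pi * real l / real N - pi * real k / real N\<bar>" unfolding e using N
          by (simp add: abs_mult abs_divide)
        have "\<bar>real l - real k\<bar> < real N" using lk by linarith
        then have "\<bar>real l - real k\<bar> / real N < 1" using N by simp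
        then have "pi * (\<bar>real l - real k\<bar> / real N) < pi * 1" using pi_gt_zero
          by (rule mult_strict_left_mono)
        then have "pi * (\<bar>real l - real k\<bar> / real N) < pi * 2" using pi_gt_zero by linarith
        then show "\<bar>pi * real l / real N - pi * real k / real N\<bar> < 2 * pi" unfolding e using N
          by (simp add: abs_mult abs_divide mult_ac)
      qed
      then show ?thesis using xiy by simp
    qed
    have xy: "x \<noteq> y" using xiy1 x0 by auto
    have ixy: "inverse x * y \<noteq> 1" using xiy1 x0 by (metis inverse_1 inverse_inverse_eq inverse_mult_distrib mult.commute)
    have xiyN: "(x * inverse y) ^ N = s" using N
      by (simp add: x_def y_def s_def power_mult_distrib cis_pow_N cis_pow_N_neg power_add)
    have ixyN': "(inverse x * y) ^ N = s" using N
      by (simp add: x_def y_def s_def power_mult_distrib cis_pow_N cis_pow_N_neg power_add)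
    have S2: "(\<Sum>j\<in>{1..N}. (x * inverse y) ^ j) = (x * inverse y) * (s - 1) / (x * inverse y - 1)"
      using geo_sum[OF xiy1, of N] xiyN by simp
    have S3: "(\<Sum>j\<in>{1..N}. (inverse x * y) ^ j) = (inverse x * y) * (s - 1) / (inverse x * y - 1)"
      using geo_sum[OF ixy, of N] ixyN' by simp
    have "(\<Sum>j\<in>{1..N}. Acoef N l j * Acoef N k j) = 0"
      unfolding sumA S1 S2 S3 S4 using key_alg[OF x0 xy1 xy] .
    then show ?thesis using False by (simp add: Gm_def)
  next
    case True
    then have yx: "y = x" by (simp add: x_def y_def)
    have s1: "s = 1" using True by (simp add: s_def)
    have S2: "(\<Sum>j\<in>{1..N}. (x * inverse y) ^ j) = of_nat N" using x0 yx by simp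
    have S3: "(\<Sum>j\<in>{1..N}. (inverse x * y) ^ j) = of_nat N" using x0 yx by simp
    have "(\<Sum>j\<in>{1..N}. Acoef N l j * Acoef N k j) =
       - ((1/2) * (1 + \<i> * inverse x) * ((1/2) * (1 + \<i> * x)) * of_nat N)
       - (1/2) * (1 + \<i> * x) * ((1/2) * (1 + \<i> * inverse x)) * of_nat N"
      unfolding sumA S1 S2 S3 S4 s1 unfolding yx by simp
    also have "\<dots> = - \<i> * (x + inverse x) * of_nat N / 2"
      using x0 by (simp add: field_simps)
    finally have "(\<Sum>j\<in>{1..N}. Acoef N l j * Acoef N k j) = - \<i> * (x + inverse x) * of_nat N / 2" .
    then have "Gm N l k = -\<i> * (- \<i> * (x + inverse x) * of_nat N / 2)"
      unfolding Gm_def by simp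
    also have "\<dots> = - ((x + inverse x) * of_nat N / 2)" by (simp add: algebra_simps)
    also have "x + inverse x = complex_of_real (2 * cos (pi * real l / real N))"
      unfolding x_def by (rule cis_add_inv)
    finally show ?thesis using True by simp
  qed
qed


lemma assoc_DD: "A \<in> DD N \<Longrightarrow> B \<in> DD N \<Longrightarrow> C \<in> DD N \<Longrightarrow> A * B * C = A * (B * C)"
  by (rule assoc_mult_mat)
lemma distL_DD: "A \<in> DD N \<Longrightarrow> B \<in> DD N \<Longrightarrow> C \<in> DD N \<Longrightarrow> A * (B + C) = A * B + A * C"
  by (rule mult_add_distrib_mat)
lemma distR_DD: "A \<in> DD N \<Longrightarrow> B \<in> DD N \<Longrightarrow> C \<in> DD N \<Longrightarrow> (A + B) * C = A * C + B * C"
  by (rule add_mult_distrib_mat)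
lemma oneL_DD: "A \<in> DD N \<Longrightarrow> (k \<cdot>\<^sub>m 1\<^sub>m (dimH N)) * A = (k::complex) \<cdot>\<^sub>m A"
  by (simp add: smult_mult_DD[where N=N])
lemma oneR_DD: "A \<in> DD N \<Longrightarrow> A * (k \<cdot>\<^sub>m 1\<^sub>m (dimH N)) = (k::complex) \<cdot>\<^sub>m A"
  by (simp add: smult_mult_DD[where N=N])

lemma four_id:
  fixes P Q R T :: "complex mat"
  assumes c: "P \<in> DD N" "Q \<in> DD N" "R \<in> DD N" "T \<in> DD N"
    and h1: "Q * R + R * Q = k1 \<cdot>\<^sub>m 1\<^sub>m (dimH N)"
    and h2: "Q * T + T * Q = k2 \<cdot>\<^sub>m 1\<^sub>m (dimH N)"
    and h3: "P * R + R * P = k3 \<cdot>\<^sub>m 1\<^sub>m (dimH N)"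
    and h4: "P * T + T * P = k4 \<cdot>\<^sub>m 1\<^sub>m (dimH N)"
  shows "P * Q * (R * T) - R * T * (P * Q) =
         k1 \<cdot>\<^sub>m (P * T) - k2 \<cdot>\<^sub>m (P * R) + k3 \<cdot>\<^sub>m (T * Q) - k4 \<cdot>\<^sub>m (R * Q)"
proof -
  note simps = assoc_DD[where N=N] distL_DD[where N=N] distR_DD[where N=N]
  have e1: "k1 \<cdot>\<^sub>m (P * T) = P * (Q * (R * T)) + P * (R * (Q * T))"
  proof -
    have "k1 \<cdot>\<^sub>m (P * T) = P * ((k1 \<cdot>\<^sub>m 1\<^sub>m (dimH N)) * T)" using c by (simp add: oneL_DD[where N=N] smult_mult_DD[where N=N])
    also have "\<dots> = P * ((Q * R + R * Q) * T)" unfolding h1 ..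
    finally show ?thesis using c by (simp add: simps)
  qed
  have e2: "k2 \<cdot>\<^sub>m (P * R) = P * (R * (Q * T)) + P * (R * (T * Q))"
  proof -
    have "k2 \<cdot>\<^sub>m (P * R) = P * (R * (k2 \<cdot>\<^sub>m 1\<^sub>m (dimH N)))" using c by (simp add: oneR_DD[where N=N] smult_mult_DD[where N=N])
    also have "\<dots> = P * (R * (Q * T + T * Q))" unfolding h2 ..
    finally show ?thesis using c by (simp add: simps)
  qed
  have e3: "k3 \<cdot>\<^sub>m (T * Q) = P * (R * (T * Q)) + R * (P * (T * Q))"
  proof -
    have "k3 \<cdot>\<^sub>m (T * Q) = (k3 \<cdot>\<^sub>m 1\<^sub>m (dimH N)) * (T * Q)" using c by (simp add: oneL_DD[where N=N])
    also have "\<dots> = (P * R + R * P) * (T * Q)" unfolding h3 ..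
    finally show ?thesis using c by (simp add: simps)
  qed
  have e4: "k4 \<cdot>\<^sub>m (R * Q) = R * (P * (T * Q)) + R * (T * (P * Q))"
  proof -
    have "k4 \<cdot>\<^sub>m (R * Q) = R * ((k4 \<cdot>\<^sub>m 1\<^sub>m (dimH N)) * Q)" using c by (simp add: oneL_DD[where N=N] smult_mult_DD[where N=N])
    also have "\<dots> = R * ((P * T + T * P) * Q)" unfolding h4 ..
    finally show ?thesis using c by (simp add: simps)
  qed
  have l: "P * Q * (R * T) - R * T * (P * Q) = P * (Q * (R * T)) - R * (T * (P * Q))"
    using c by (simp add: simps)
  show ?thesis unfolding l e1 e2 e3 e4
    using c by (intro eq_matI) auto
qed


lemma smult_minus_DD: "A \<in> DD N \<Longrightarrow> B \<in> DD N \<Longrightarrow> (c::complex) \<cdot>\<^sub>m A - c \<cdot>\<^sub>m B = c \<cdot>\<^sub>m (A - B)"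
  by (intro eq_matI) (auto simp: algebra_simps)

lemma comm_single:
  fixes a b :: "int \<Rightarrow> complex" and P Q R T :: "int \<Rightarrow> complex mat"
    and k1 k2 k3 k4 :: "int \<Rightarrow> int \<Rightarrow> complex"
  assumes fin: "finite S"
    and c: "\<And>j. j \<in> S \<Longrightarrow> P j \<in> DD N" "\<And>j. j \<in> S \<Longrightarrow> Q j \<in> DD N"
      "\<And>j. j \<in> S \<Longrightarrow> R j \<in> DD N" "\<And>j. j \<in> S \<Longrightarrow> T j \<in> DD N"
    and h1: "\<And>j k. j \<in> S \<Longrightarrow> k \<in> S \<Longrightarrow> Q j * R k + R k * Q j = k1 j k \<cdot>\<^sub>m 1\<^sub>m (dimH N)"
    and h2: "\<And>j k. j \<in> S \<Longrightarrow> k \<in> S \<Longrightarrow> Q j * T k + T k * Q j = k2 j k \<cdot>\<^sub>m 1\<^sub>m (dimH N)"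
    and h3: "\<And>j k. j \<in> S \<Longrightarrow> k \<in> S \<Longrightarrow> P j * R k + R k * P j = k3 j k \<cdot>\<^sub>m 1\<^sub>m (dimH N)"
    and h4: "\<And>j k. j \<in> S \<Longrightarrow> k \<in> S \<Longrightarrow> P j * T k + T k * P j = k4 j k \<cdot>\<^sub>m 1\<^sub>m (dimH N)"
  shows "commutator (msum N S (\<lambda>j. a j \<cdot>\<^sub>m (P j * Q j))) (msum N S (\<lambda>k. b k \<cdot>\<^sub>m (R k * T k)))
    = msum N (S \<times> S) (\<lambda>(j,k). (a j * b k) \<cdot>\<^sub>m (k1 j k \<cdot>\<^sub>m (P j * T k) - k2 j k \<cdot>\<^sub>m (P j * R k)
          + k3 j k \<cdot>\<^sub>m (T k * Q j) - k4 j k \<cdot>\<^sub>m (R k * Q j)))"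
proof -
  have m1: "msum N S (\<lambda>j. a j \<cdot>\<^sub>m (P j * Q j)) * msum N S (\<lambda>k. b k \<cdot>\<^sub>m (R k * T k))
     = msum N (S \<times> S) (\<lambda>(j,k). (a j \<cdot>\<^sub>m (P j * Q j)) * (b k \<cdot>\<^sub>m (R k * T k)))"
    using fin c by (intro msum_mult) auto
  have m2: "msum N S (\<lambda>k. b k \<cdot>\<^sub>m (R k * T k)) * msum N S (\<lambda>j. a j \<cdot>\<^sub>m (P j * Q j))
     = msum N (S \<times> S) (\<lambda>(j,k). (b k \<cdot>\<^sub>m (R k * T k)) * (a j \<cdot>\<^sub>m (P j * Q j)))"
  proof -
    have "msum N S (\<lambda>k. b k \<cdot>\<^sub>m (R k * T k)) * msum N S (\<lambda>j. a j \<cdot>\<^sub>m (P j * Q j))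
       = msum N (S \<times> S) (\<lambda>(k,j). (b k \<cdot>\<^sub>m (R k * T k)) * (a j \<cdot>\<^sub>m (P j * Q j)))"
      using fin c by (intro msum_mult) auto
    also have "\<dots> = msum N (S \<times> S) (\<lambda>(j,k). (b k \<cdot>\<^sub>m (R k * T k)) * (a j \<cdot>\<^sub>m (P j * Q j)))"
      by (rule msum_swap)
    finally show ?thesis .
  qed
  have "commutator (msum N S (\<lambda>j. a j \<cdot>\<^sub>m (P j * Q j))) (msum N S (\<lambda>k. b k \<cdot>\<^sub>m (R k * T k)))
     = msum N (S \<times> S) (\<lambda>p. (case p of (j,k) \<Rightarrow> (a j \<cdot>\<^sub>m (P j * Q j)) * (b k \<cdot>\<^sub>m (R k * T k)))
         - (case p of (j,k) \<Rightarrow> (b k \<cdot>\<^sub>m (R k * T k)) * (a j \<cdot>\<^sub>m (P j * Q j))))"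
    unfolding commutator_def m1 m2 using c by (intro msum_minus) auto
  also have "\<dots> = msum N (S \<times> S) (\<lambda>(j,k). (a j * b k) \<cdot>\<^sub>m (k1 j k \<cdot>\<^sub>m (P j * T k) - k2 j k \<cdot>\<^sub>m (P j * R k)
          + k3 j k \<cdot>\<^sub>m (T k * Q j) - k4 j k \<cdot>\<^sub>m (R k * Q j)))"
  proof (rule msum_cong[OF refl], clarify)
    fix j k assume jk: "j \<in> S" "k \<in> S"
    have cc: "P j \<in> DD N" "Q j \<in> DD N" "R k \<in> DD N" "T k \<in> DD N" using c jk by auto
    have "(a j \<cdot>\<^sub>m (P j * Q j)) * (b k \<cdot>\<^sub>m (R k * T k)) - (b k \<cdot>\<^sub>m (R k * T k)) * (a j \<cdot>\<^sub>m (P j * Q j))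
        = (a j * b k) \<cdot>\<^sub>m (P j * Q j * (R k * T k) - R k * T k * (P j * Q j))"
      using cc by (simp add: smult_mult_DD[where N=N] smult_smult_m smult_minus_DD[where N=N] mult.commute)
    also have "P j * Q j * (R k * T k) - R k * T k * (P j * Q j) =
        k1 j k \<cdot>\<^sub>m (P j * T k) - k2 j k \<cdot>\<^sub>m (P j * R k) + k3 j k \<cdot>\<^sub>m (T k * Q j) - k4 j k \<cdot>\<^sub>m (R k * Q j)"
      by (rule four_id[OF cc h1[OF jk] h2[OF jk] h3[OF jk] h4[OF jk]])
    finally show "(a j \<cdot>\<^sub>m (P j * Q j)) * (b k \<cdot>\<^sub>m (R k * T k)) - (b k \<cdot>\<^sub>m (R k * T k)) * (a j \<cdot>\<^sub>m (P j * Q j))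
        = (a j * b k) \<cdot>\<^sub>m (k1 j k \<cdot>\<^sub>m (P j * T k) - k2 j k \<cdot>\<^sub>m (P j * R k)
          + k3 j k \<cdot>\<^sub>m (T k * Q j) - k4 j k \<cdot>\<^sub>m (R k * Q j))" .
  qed
  finally show ?thesis .
qed

lemma msum_collapse:
  assumes "finite S" "\<And>j. j \<in> S \<Longrightarrow> s j \<in> S"
  shows "msum N (S \<times> S) (\<lambda>(j,k). if k = s j then M j k else 0\<^sub>m (dimH N) (dimH N)) = msum N S (\<lambda>j. M j (s j))"
proof (rule eq_matI)
  fix i l assume "i < dim_row (msum N S (\<lambda>j. M j (s j)))" "l < dim_col (msum N S (\<lambda>j. M j (s j)))"
  then have il: "i < dimH N" "l < dimH N" by auto
  have "(\<Sum>p\<in>S \<times> S. (case p of (j,k) \<Rightarrow> if k = s j then M j k else 0\<^sub>m (dimH N) (dimH N)) $$ (i,l))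
      = (\<Sum>j\<in>S. \<Sum>k\<in>S. if k = s j then M j k $$ (i,l) else 0)"
    using il by (auto simp: sum.cartesian_product intro!: sum.cong)
  also have "\<dots> = (\<Sum>j\<in>S. M j (s j) $$ (i,l))"
    using assms by (intro sum.cong refl) (simp add: sum.delta')
  finally show "msum N (S \<times> S) (\<lambda>(j,k). if k = s j then M j k else 0\<^sub>m (dimH N) (dimH N)) $$ (i, l) =
      msum N S (\<lambda>j. M j (s j)) $$ (i, l)" using il by simp
qed auto


lemma comm_collapse:
  fixes a b c1 c2 c3 c4 :: "int \<Rightarrow> complex" and P Q R T :: "int \<Rightarrow> complex mat"
    and s1 s2 s3 s4 :: "int \<Rightarrow> int"
  assumes fin: "finite S"
    and c: "\<And>j. j \<in> S \<Longrightarrow> P j \<in> DD N" "\<And>j. j \<in> S \<Longrightarrow> Q j \<in> DD N"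
      "\<And>j. j \<in> S \<Longrightarrow> R j \<in> DD N" "\<And>j. j \<in> S \<Longrightarrow> T j \<in> DD N"
    and s: "\<And>j. j \<in> S \<Longrightarrow> s1 j \<in> S" "\<And>j. j \<in> S \<Longrightarrow> s2 j \<in> S"
      "\<And>j. j \<in> S \<Longrightarrow> s3 j \<in> S" "\<And>j. j \<in> S \<Longrightarrow> s4 j \<in> S"
    and h1: "\<And>j k. j \<in> S \<Longrightarrow> k \<in> S \<Longrightarrow> Q j * R k + R k * Q j = (if k = s1 j then c1 j else 0) \<cdot>\<^sub>m 1\<^sub>m (dimH N)"
    and h2: "\<And>j k. j \<in> S \<Longrightarrow> k \<in> S \<Longrightarrow> Q j * T k + T k * Q j = (if k = s2 j then c2 j else 0) \<cdot>\<^sub>m 1\<^sub>m (dimH N)"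
    and h3: "\<And>j k. j \<in> S \<Longrightarrow> k \<in> S \<Longrightarrow> P j * R k + R k * P j = (if k = s3 j then c3 j else 0) \<cdot>\<^sub>m 1\<^sub>m (dimH N)"
    and h4: "\<And>j k. j \<in> S \<Longrightarrow> k \<in> S \<Longrightarrow> P j * T k + T k * P j = (if k = s4 j then c4 j else 0) \<cdot>\<^sub>m 1\<^sub>m (dimH N)"
  shows "commutator (msum N S (\<lambda>j. a j \<cdot>\<^sub>m (P j * Q j))) (msum N S (\<lambda>k. b k \<cdot>\<^sub>m (R k * T k)))
    = msum N S (\<lambda>j. (a j * b (s1 j) * c1 j) \<cdot>\<^sub>m (P j * T (s1 j)))
      - msum N S (\<lambda>j. (a j * b (s2 j) * c2 j) \<cdot>\<^sub>m (P j * R (s2 j)))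
      + msum N S (\<lambda>j. (a j * b (s3 j) * c3 j) \<cdot>\<^sub>m (T (s3 j) * Q j))
      - msum N S (\<lambda>j. (a j * b (s4 j) * c4 j) \<cdot>\<^sub>m (R (s4 j) * Q j))"
proof -
  define Z :: "complex mat" where "Z = 0\<^sub>m (dimH N) (dimH N)"
  define I1 where "I1 = (\<lambda>(j,k). if k = s1 j then (a j * b k * c1 j) \<cdot>\<^sub>m (P j * T k) else Z)"
  define I2 where "I2 = (\<lambda>(j,k). if k = s2 j then (a j * b k * c2 j) \<cdot>\<^sub>m (P j * R k) else Z)"
  define I3 where "I3 = (\<lambda>(j,k). if k = s3 j then (a j * b k * c3 j) \<cdot>\<^sub>m (T k * Q j) else Z)"
  define I4 where "I4 = (\<lambda>(j,k). if k = s4 j then (a j * b k * c4 j) \<cdot>\<^sub>m (R k * Q j) else Z)"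
  have cI: "\<And>p. p \<in> S \<times> S \<Longrightarrow> I1 p \<in> DD N \<and> I2 p \<in> DD N \<and> I3 p \<in> DD N \<and> I4 p \<in> DD N"
    using c by (auto simp: I1_def I2_def I3_def I4_def Z_def)
  have "commutator (msum N S (\<lambda>j. a j \<cdot>\<^sub>m (P j * Q j))) (msum N S (\<lambda>k. b k \<cdot>\<^sub>m (R k * T k)))
    = msum N (S \<times> S) (\<lambda>(j,k). (a j * b k) \<cdot>\<^sub>m ((if k = s1 j then c1 j else 0) \<cdot>\<^sub>m (P j * T k)
          - (if k = s2 j then c2 j else 0) \<cdot>\<^sub>m (P j * R k)
          + (if k = s3 j then c3 j else 0) \<cdot>\<^sub>m (T k * Q j) - (if k = s4 j then c4 j else 0) \<cdot>\<^sub>m (R k * Q j)))"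
    by (rule comm_single[OF fin c h1 h2 h3 h4])
  also have "\<dots> = msum N (S \<times> S) (\<lambda>p. I1 p - I2 p + I3 p - I4 p)"
  proof (rule msum_cong[OF refl], clarify)
    fix j k assume jk: "j \<in> S" "k \<in> S"
    then have cc: "P j \<in> DD N" "Q j \<in> DD N" "R k \<in> DD N" "T k \<in> DD N" using c by auto
    show "(a j * b k) \<cdot>\<^sub>m ((if k = s1 j then c1 j else 0) \<cdot>\<^sub>m (P j * T k)
          - (if k = s2 j then c2 j else 0) \<cdot>\<^sub>m (P j * R k)
          + (if k = s3 j then c3 j else 0) \<cdot>\<^sub>m (T k * Q j) - (if k = s4 j then c4 j else 0) \<cdot>\<^sub>m (R k * Q j))
        = I1 (j,k) - I2 (j,k) + I3 (j,k) - I4 (j,k)"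
      unfolding I1_def I2_def I3_def I4_def Z_def using cc
      by (intro eq_matI) (auto simp: algebra_simps)
  qed
  also have "\<dots> = msum N (S \<times> S) I1 - msum N (S \<times> S) I2 + msum N (S \<times> S) I3 - msum N (S \<times> S) I4"
  proof (intro eq_matI)
    fix i l assume "i < dim_row (msum N (S \<times> S) I1 - msum N (S \<times> S) I2 + msum N (S \<times> S) I3 - msum N (S \<times> S) I4)"
        "l < dim_col (msum N (S \<times> S) I1 - msum N (S \<times> S) I2 + msum N (S \<times> S) I3 - msum N (S \<times> S) I4)"
    then have il: "i < dimH N" "l < dimH N" by auto
    have pt: "\<And>p. p \<in> S \<times> S \<Longrightarrow> (I1 p - I2 p + I3 p - I4 p) $$ (i,l) = I1 p $$ (i,l) - I2 p $$ (i,l) + I3 p $$ (i,l) - I4 p $$ (i,l)"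
    proof -
      fix p assume "p \<in> S \<times> S"
      then have "I1 p \<in> DD N" "I2 p \<in> DD N" "I3 p \<in> DD N" "I4 p \<in> DD N" using cI by auto
      then show "(I1 p - I2 p + I3 p - I4 p) $$ (i,l) = I1 p $$ (i,l) - I2 p $$ (i,l) + I3 p $$ (i,l) - I4 p $$ (i,l)"
        using il by simp
    qed
    show "msum N (S \<times> S) (\<lambda>p. I1 p - I2 p + I3 p - I4 p) $$ (i, l) =
      (msum N (S \<times> S) I1 - msum N (S \<times> S) I2 + msum N (S \<times> S) I3 - msum N (S \<times> S) I4) $$ (i, l)"
      using il by (simp add: pt sum.distrib sum_subtractf)
  qed auto
  also have "msum N (S \<times> S) I1 = msum N S (\<lambda>j. (a j * b (s1 j) * c1 j) \<cdot>\<^sub>m (P j * T (s1 j)))"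
    unfolding I1_def Z_def using msum_collapse[of S s1 N "\<lambda>j k. (a j * b k * c1 j) \<cdot>\<^sub>m (P j * T k)", OF fin s(1)]
    by (simp add: case_prod_beta')
  also have "msum N (S \<times> S) I2 = msum N S (\<lambda>j. (a j * b (s2 j) * c2 j) \<cdot>\<^sub>m (P j * R (s2 j)))"
    unfolding I2_def Z_def using msum_collapse[of S s2 N "\<lambda>j k. (a j * b k * c2 j) \<cdot>\<^sub>m (P j * R k)", OF fin s(2)]
    by (simp add: case_prod_beta')
  also have "msum N (S \<times> S) I3 = msum N S (\<lambda>j. (a j * b (s3 j) * c3 j) \<cdot>\<^sub>m (T (s3 j) * Q j))"
    unfolding I3_def Z_def using msum_collapse[of S s3 N "\<lambda>j k. (a j * b k * c3 j) \<cdot>\<^sub>m (T k * Q j)", OF fin s(3)]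
    by (simp add: case_prod_beta')
  also have "msum N (S \<times> S) I4 = msum N S (\<lambda>j. (a j * b (s4 j) * c4 j) \<cdot>\<^sub>m (R (s4 j) * Q j))"
    unfolding I4_def Z_def using msum_collapse[of S s4 N "\<lambda>j k. (a j * b k * c4 j) \<cdot>\<^sub>m (R k * Q j)", OF fin s(4)]
    by (simp add: case_prod_beta')
  finally show ?thesis .
qed


lemma pi_frac_less:
  assumes "0 < N" "x < real N"
  shows "pi * x / real N < pi"
proof -
  have "x / real N < 1" using assms by simp
  then have "pi * (x / real N) < pi * 1" using pi_gt_zero by (rule mult_strict_left_mono)
  then show ?thesis by simp
qed

lemma sinc_pos:
  assumes N: "0 < N" and j: "- int N < j" "j < int N" "j \<noteq> 0"
  shows "0 < sin (pi * real_of_int j / real N) / real_of_int j"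
proof (cases "j > 0")
  case True
  have "real_of_int j < real N" using j by linarith
  then have "pi * real_of_int j / real N < pi" using N by (rule pi_frac_less[rotated])
  moreover have "0 < pi * real_of_int j / real N" using True N by simp
  ultimately have "0 < sin (pi * real_of_int j / real N)" by (intro sin_gt_zero)
  then show ?thesis using True by simp
next
  case False
  then have jn: "j < 0" using j by simp
  have "real_of_int (-j) < real N" using j by linarith
  then have "pi * real_of_int (-j) / real N < pi" using N by (rule pi_frac_less[rotated])
  moreover have "0 < pi * real_of_int (-j) / real N" using jn N by (intro divide_pos_pos mult_pos_pos) auto
  ultimately have "0 < sin (pi * real_of_int (-j) / real N)" by (intro sin_gt_zero)
  then have "sin (pi * real_of_int j / real N) < 0" by simp
  then show ?thesis using jn by (simp add: divide_neg_neg)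
qed

lemma sinc_fac_pos:
  assumes "0 < N" "- int N < j" "j < int N"
  shows "0 < sinc_fac N j"
  using sinc_pos[OF assms] assms(1) by (auto simp: sinc_fac_def)

lemma sinc_fac_neg: "sinc_fac N (-j) = sinc_fac N j"
  by (simp add: sinc_fac_def)

lemma mode_range_iff: "j \<in> mode_range N \<longleftrightarrow> - int (N div 2) + 1 \<le> j \<and> j \<le> int (N div 2) - 1"
  by (simp add: mode_range_def)

lemma mode_range_neg: "j \<in> mode_range N \<Longrightarrow> - j \<in> mode_range N"
  by (auto simp: mode_range_iff)

lemma finite_mode_range[simp]: "finite (mode_range N)"
  by (simp add: mode_range_def)

definition wco :: "nat \<Rightarrow> nat \<Rightarrow> int \<Rightarrow> real" where
  "wco N r j = 2 * sinc_fac N j * sin (pi * real_of_int j / real N) * cos (pi * real_of_int j / real N) ^ r"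

lemma wco_neg: "wco N r (-j) = - wco N r j"
  by (simp add: wco_def sinc_fac_neg)

lemma SU:
  assumes N: "even N" "2 \<le> N" and r: "even r" and jj: "j1 \<in> mode_range N" "j2 \<in> mode_range N"
  shows "Sfac N j1 j2 * Ucoef N r j1 j2 = (if j2 = - j1 then wco N r j1 else 0)"
proof -
  have nN: "j1 - j2 \<noteq> - int N" using jj N by (auto simp: mode_range_iff)
  show ?thesis
  proof (cases "j2 = - j1")
    case True
    have pos: "0 < sinc_fac N j1" using jj N by (intro sinc_fac_pos) (auto simp: mode_range_iff)
    have "Sfac N j1 j2 = sinc_fac N j1"
      using True pos by (simp add: Sfac_def sinc_fac_neg)
    moreover have "Ucoef N r j1 j2 = 2 * sin (pi * real_of_int j1 / real N) * cos (pi * real_of_int j1 / real N) ^ r"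
    proof -
      have "pi * real_of_int (j1 - j2) / (2 * real N) = pi * real_of_int j1 / real N"
        using True by (simp add: field_simps)
      then show ?thesis using True nN r by (simp add: Ucoef_def)
    qed
    ultimately show ?thesis using True by (simp add: wco_def)
  next
    case False
    then have "j1 + j2 \<noteq> 0" by simp
    then show ?thesis using False nN by (simp add: Ucoef_def)
  qed
qed


definition alpha :: "nat \<Rightarrow> int \<Rightarrow> real" where
  "alpha N j = (if j = 0 then 1 / sqrt pi else sqrt (real_of_int j / (real N * sin (pi * real_of_int j / real N))))"

lemma eta_p_eq: "eta_p N j = complex_of_real (alpha N j) \<cdot>\<^sub>m thetadag N (nat (int (N div 2) + j))"
  by (simp add: eta_p_def alpha_def)
lemma eta_m_eq: "eta_m N j = complex_of_real (alpha N j) \<cdot>\<^sub>m theta N (nat (int (N div 2) - j))"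
  by (simp add: eta_m_def alpha_def)

lemma eta_p_carrier[simp]: "eta_p N j \<in> DD N" by (simp add: eta_p_eq)
lemma eta_m_carrier[simp]: "eta_m N j \<in> DD N" by (simp add: eta_m_eq)

lemma alpha_neg: "alpha N (-j) = alpha N j"
  by (simp add: alpha_def)

lemma anti_smult:
  assumes "X \<in> DD N" "Y \<in> DD N"
  shows "((a::complex) \<cdot>\<^sub>m X) * (b \<cdot>\<^sub>m Y) + (b \<cdot>\<^sub>m Y) * (a \<cdot>\<^sub>m X) = (a * b) \<cdot>\<^sub>m (X * Y + Y * X)"
  using assms by (simp add: smult_mult_DD[where N=N] smult_smult_m mult.commute)

lemma AA_anti: "eta_p N j * eta_p N k + eta_p N k * eta_p N j = 0\<^sub>m (dimH N) (dimH N)"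
  unfolding eta_p_eq by (simp add: anti_smult[where N=N] TT_anti)

lemma BB_anti: "eta_m N j * eta_m N k + eta_m N k * eta_m N j = 0\<^sub>m (dimH N) (dimH N)"
  unfolding eta_m_eq by (simp add: anti_smult[where N=N] SS_anti)

lemma alpha_sq:
  assumes N: "even N" "2 \<le> N" and j: "j \<in> mode_range N"
  shows "alpha N j * alpha N j * (real N * sin (pi * real_of_int j / real N)) = real_of_int j"
proof (cases "j = 0")
  case True then show ?thesis by simp
next
  case False
  have pos: "0 < sin (pi * real_of_int j / real N) / real_of_int j"
    using j N False by (intro sinc_pos) (auto simp: mode_range_iff)
  then have sne: "sin (pi * real_of_int j / real N) \<noteq> 0" by auto
  have "0 < real_of_int j / (real N * sin (pi * real_of_int j / real N))"
  proof -
    have eq: "real_of_int j / (real N * sin (pi * real_of_int j / real N))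
        = 1 / (real N * (sin (pi * real_of_int j / real N) / real_of_int j))"
      using False sne by (simp add: field_simps)
    have "0 < real N * (sin (pi * real_of_int j / real N) / real_of_int j)"
      using pos N by (intro mult_pos_pos) auto
    then have "0 < 1 / (real N * (sin (pi * real_of_int j / real N) / real_of_int j))"
      by (subst zero_less_divide_1_iff)
    then show ?thesis using eq by (simp only:)
  qed
  then have aa: "alpha N j * alpha N j = real_of_int j / (real N * sin (pi * real_of_int j / real N))"
  proof -
    assume A: "0 < real_of_int j / (real N * sin (pi * real_of_int j / real N))"
    have "alpha N j = sqrt (real_of_int j / (real N * sin (pi * real_of_int j / real N)))"
      using False by (simp add: alpha_def)
    then show ?thesis using A by (simp only: real_sqrt_mult_self abs_of_pos)
  qed
  have "real N \<noteq> 0" using N by simp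
  then show ?thesis unfolding aa using sne by (simp add: field_simps)
qed

lemma BA_anti:
  assumes N: "even N" "2 \<le> N" and jk: "j \<in> mode_range N" "k \<in> mode_range N"
  shows "eta_m N j * eta_p N k + eta_p N k * eta_m N j
       = (if k = - j then - of_int j else 0) \<cdot>\<^sub>m 1\<^sub>m (dimH N)"
proof -
  define l where "l = nat (int (N div 2) - j)"
  define m where "m = nat (int (N div 2) + k)"
  have lr: "1 \<le> l" "l < N" "1 \<le> m" "m < N" using jk N by (auto simp: l_def m_def mode_range_iff)
  have lm: "l = m \<longleftrightarrow> k = - j" using jk N by (auto simp: l_def m_def mode_range_iff)
  have "eta_m N j * eta_p N k + eta_p N k * eta_m N j
      = complex_of_real (alpha N j * alpha N k) \<cdot>\<^sub>m (theta N l * thetadag N m + thetadag N m * theta N l)"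
    unfolding eta_m_eq eta_p_eq l_def m_def by (simp add: anti_smult[where N=N])
  also have "\<dots> = (complex_of_real (alpha N j * alpha N k) * Gm N l m) \<cdot>\<^sub>m 1\<^sub>m (dimH N)"
    by (simp add: ST_anti smult_smult_m)
  also have "complex_of_real (alpha N j * alpha N k) * Gm N l m = (if k = - j then - of_int j else 0)"
  proof (cases "k = - j")
    case True
    then have lm': "l = m" using lm by simp
    have rl: "real l = real N / 2 - real_of_int j"
    proof -
      have "int (N div 2) - j \<ge> 0" using jk N by (auto simp: mode_range_iff)
      then have "real l = real_of_int (int (N div 2) - j)" by (simp add: l_def)
      also have "\<dots> = real N / 2 - real_of_int j" using N by (auto elim!: evenE)
      finally show ?thesis .
    qed
    have "cos (pi * real l / real N) = sin (pi * real_of_int j / real N)"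
    proof -
      have "pi * real l / real N = pi / 2 - pi * real_of_int j / real N"
        using N unfolding rl by (simp add: field_simps)
      then show ?thesis by (simp add: cos_sin_eq)
    qed
    then have "Gm N l m = - complex_of_real (real N * sin (pi * real_of_int j / real N))"
      using Gm_closed[of N l m] lr N lm' by simp
    moreover have "alpha N k = alpha N j" using True alpha_neg by simp
    ultimately have "complex_of_real (alpha N j * alpha N k) * Gm N l m
        = - complex_of_real (alpha N j * alpha N j * (real N * sin (pi * real_of_int j / real N)))"
      by (simp add: mult_ac)
    also have "\<dots> = - of_int j" using alpha_sq[OF N jk(1)] by simp
    finally show ?thesis using True by simp
  next
    case False
    then have "l \<noteq> m" using lm by simp
    then show ?thesis using Gm_closed[of N l m] lr N False by simp
  qed
  finally show ?thesis .
qed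

lemma AB_anti:
  assumes N: "even N" "2 \<le> N" and jk: "j \<in> mode_range N" "k \<in> mode_range N"
  shows "eta_p N k * eta_m N j + eta_m N j * eta_p N k
       = (if k = - j then - of_int j else 0) \<cdot>\<^sub>m 1\<^sub>m (dimH N)"
  using BA_anti[OF assms] by (simp add: comm_add_mat[of _ "dimH N" "dimH N"])

lemma zero_as: "0\<^sub>m (dimH N) (dimH N) = (if k = s then (0::complex) else 0) \<cdot>\<^sub>m 1\<^sub>m (dimH N)"
  by (intro eq_matI) auto


lemma zero_smult_DD: "M \<in> DD N \<Longrightarrow> (0::complex) \<cdot>\<^sub>m M = 0\<^sub>m (dimH N) (dimH N)"
  by (intro eq_matI) auto

lemma W_pair_collapse:
  assumes N: "even N" "2 \<le> N" and r: "even r"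
    and c: "\<And>j k. X j k \<in> DD N"
  shows "msum N (mode_range N \<times> mode_range N)
     (\<lambda>(j1, j2). complex_of_real (Sfac N j1 j2 * Ucoef N r j1 j2) \<cdot>\<^sub>m X j1 j2)
   = msum N (mode_range N) (\<lambda>j. complex_of_real (wco N r j) \<cdot>\<^sub>m X j (-j))"
proof -
  have "msum N (mode_range N \<times> mode_range N)
     (\<lambda>(j1, j2). complex_of_real (Sfac N j1 j2 * Ucoef N r j1 j2) \<cdot>\<^sub>m X j1 j2)
   = msum N (mode_range N \<times> mode_range N)
     (\<lambda>(j, k). if k = - j then complex_of_real (wco N r j) \<cdot>\<^sub>m X j k else 0\<^sub>m (dimH N) (dimH N))"
    by (rule msum_cong[OF refl]) (auto simp: SU[OF N r] zero_smult_DD[OF c] simp del: of_real_mult)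
  also have "\<dots> = msum N (mode_range N) (\<lambda>j. complex_of_real (wco N r j) \<cdot>\<^sub>m X j (-j))"
    by (rule msum_collapse) (auto simp: mode_range_neg)
  finally show ?thesis .
qed

lemma W_plus_eq:
  assumes "even N" "2 \<le> N" "even r"
  shows "W_plus N r = msum N (mode_range N) (\<lambda>j. complex_of_real (wco N r j) \<cdot>\<^sub>m (eta_p N j * eta_p N (-j)))"
  unfolding W_plus_def by (rule W_pair_collapse[OF assms]) simp

lemma W_minus_eq:
  assumes "even N" "2 \<le> N" "even r"
  shows "W_minus N r = msum N (mode_range N) (\<lambda>j. complex_of_real (wco N r j) \<cdot>\<^sub>m (eta_m N j * eta_m N (-j)))"
  unfolding W_minus_def by (rule W_pair_collapse[OF assms]) simp

lemma W_zero_eq: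
  assumes "even N" "2 \<le> N" "even r"
  shows "W_zero N r = msum N (mode_range N) (\<lambda>j. complex_of_real (wco N r j) \<cdot>\<^sub>m (eta_p N j * eta_m N (-j)))
      + msum N (mode_range N) (\<lambda>j. complex_of_real (wco N r j) \<cdot>\<^sub>m (eta_m N j * eta_p N (-j)))"
proof -
  have "W_zero N r = msum N (mode_range N \<times> mode_range N)
     (\<lambda>p. (case p of (j1, j2) \<Rightarrow> complex_of_real (Sfac N j1 j2 * Ucoef N r j1 j2) \<cdot>\<^sub>m (eta_p N j1 * eta_m N j2))
       + (case p of (j1, j2) \<Rightarrow> complex_of_real (Sfac N j1 j2 * Ucoef N r j1 j2) \<cdot>\<^sub>m (eta_m N j1 * eta_p N j2)))"
    unfolding W_zero_def
    by (rule msum_cong[OF refl]) (auto simp: smult_mult_DD[where N=N])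
  also have "\<dots> = msum N (mode_range N \<times> mode_range N)
     (\<lambda>(j1, j2). complex_of_real (Sfac N j1 j2 * Ucoef N r j1 j2) \<cdot>\<^sub>m (eta_p N j1 * eta_m N j2))
     + msum N (mode_range N \<times> mode_range N)
     (\<lambda>(j1, j2). complex_of_real (Sfac N j1 j2 * Ucoef N r j1 j2) \<cdot>\<^sub>m (eta_m N j1 * eta_p N j2))"
    by (rule msum_add[symmetric]) auto
  also have "\<dots> = msum N (mode_range N) (\<lambda>j. complex_of_real (wco N r j) \<cdot>\<^sub>m (eta_p N j * eta_m N (-j)))
      + msum N (mode_range N) (\<lambda>j. complex_of_real (wco N r j) \<cdot>\<^sub>m (eta_m N j * eta_p N (-j)))"
    using W_pair_collapse[OF assms, of "\<lambda>j1 j2. eta_p N j1 * eta_m N j2"]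
      W_pair_collapse[OF assms, of "\<lambda>j1 j2. eta_m N j1 * eta_p N j2"] by simp
  finally show ?thesis .
qed

lemma lc_add: "(\<And>j. j \<in> S \<Longrightarrow> M j \<in> DD N) \<Longrightarrow>
  msum N S (\<lambda>j. a j \<cdot>\<^sub>m M j) + msum N S (\<lambda>j. b j \<cdot>\<^sub>m M j) = msum N S (\<lambda>j. (a j + b j) \<cdot>\<^sub>m M j)"
  by (subst msum_add) (auto intro!: msum_cong simp: add_smult_distrib_right_mat[where nr="dimH N" and nc="dimH N"])

lemma lc_minus: "(\<And>j. j \<in> S \<Longrightarrow> M j \<in> DD N) \<Longrightarrow>
  msum N S (\<lambda>j. a j \<cdot>\<^sub>m M j) - msum N S (\<lambda>j. b j \<cdot>\<^sub>m M j) = msum N S (\<lambda>j. ((a j - b j)::complex) \<cdot>\<^sub>m M j)"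
proof (subst msum_minus)
  assume "\<And>j. j \<in> S \<Longrightarrow> M j \<in> DD N"
  then show "msum N S (\<lambda>x. a x \<cdot>\<^sub>m M x - b x \<cdot>\<^sub>m M x) = msum N S (\<lambda>j. (a j - b j) \<cdot>\<^sub>m M j)"
    by (intro msum_cong refl eq_matI) (auto simp: algebra_simps)
qed auto

lemma lc_smult: "(\<And>j. j \<in> S \<Longrightarrow> M j \<in> DD N) \<Longrightarrow>
  (c::complex) \<cdot>\<^sub>m msum N S (\<lambda>j. a j \<cdot>\<^sub>m M j) = msum N S (\<lambda>j. (c * a j) \<cdot>\<^sub>m M j)"
  by (subst msum_smult) (auto intro!: msum_cong simp: smult_smult_m)

lemma comm_add_left:
  assumes "A \<in> DD N" "B \<in> DD N" "C \<in> DD N"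
  shows "commutator (A + B) C = commutator A C + commutator B C"
  unfolding commutator_def using assms
  by (simp add: distR_DD[where N=N] distL_DD[where N=N]) (intro eq_matI, auto)


lemma j_sinc: "real_of_int j * sinc_fac N j = sin (pi * real_of_int j / real N)"
  by (cases "j = 0") (auto simp: sinc_fac_def)

lemma coef_id: "real_of_int j * wco N r j * wco N s j = 2 * (wco N (r+s) j - wco N (r+s+2) j)"
proof -
  define F where "F = sinc_fac N j"
  define S where "S = sin (pi * real_of_int j / real N)"
  define C where "C = cos (pi * real_of_int j / real N)"
  have jF: "real_of_int j * F = S" unfolding F_def S_def by (rule j_sinc)
  have SC: "S^2 = 1 - C^2" unfolding S_def C_def by (simp add: sin_squared_eq)
  have "real_of_int j * wco N r j * wco N s j = 4 * (real_of_int j * F) * F * S^2 * C^(r+s)"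
    by (simp add: wco_def F_def S_def C_def power_add power2_eq_square mult_ac)
  also have "\<dots> = 4 * F * S * C^(r+s) * S^2" unfolding jF by (simp add: power2_eq_square mult_ac)
  also have "\<dots> = 4 * F * S * C^(r+s) * (1 - C^2)" unfolding SC ..
  also have "\<dots> = 2 * (wco N (r+s) j - wco N (r+s+2) j)"
    by (simp add: wco_def F_def S_def C_def power_add power2_eq_square algebra_simps)
  finally show ?thesis .
qed

lemma coef_id_c: "of_int j * complex_of_real (wco N r j) * complex_of_real (wco N s j)
   = 2 * (complex_of_real (wco N (r+s) j) - complex_of_real (wco N (r+s+2) j))"
proof -
  have "complex_of_real (real_of_int j * wco N r j * wco N s j) = complex_of_real (2 * (wco N (r+s) j - wco N (r+s+2) j))"
    by (simp only: coef_id)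
  then show ?thesis by simp
qed

lemma msum_zero_simp[simp]: "msum N S (\<lambda>j. 0\<^sub>m (dimH N) (dimH N)) = 0\<^sub>m (dimH N) (dimH N)"
  by (rule msum_zero) simp

lemma add_zero_DD: "(A::complex mat) \<in> DD N \<Longrightarrow> A + 0\<^sub>m (dimH N) (dimH N) = A" by (intro eq_matI) auto
lemma minus_zero_DD: "(A::complex mat) \<in> DD N \<Longrightarrow> A - 0\<^sub>m (dimH N) (dimH N) = A" by (intro eq_matI) auto

lemma ident1:
  assumes N: "even N" "2 \<le> N" and r: "even r" and s: "even s"
  shows "commutator (W_zero N r) (W_plus N s)
           = (-8) \<cdot>\<^sub>m W_plus N (r + s + 2) + 8 \<cdot>\<^sub>m W_plus N (r + s)"
proof -
  let ?R = "mode_range N"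
  let ?w = "\<lambda>r j. complex_of_real (wco N r j)"
  let ?M = "\<lambda>j. eta_p N j * eta_p N (-j)"
  have E1: "commutator (msum N ?R (\<lambda>j. ?w r j \<cdot>\<^sub>m (eta_p N j * eta_m N (-j)))) (msum N ?R (\<lambda>k. ?w s k \<cdot>\<^sub>m (eta_p N k * eta_p N (-k))))
    = msum N ?R (\<lambda>j. (?w r j * ?w s j * of_int j) \<cdot>\<^sub>m (eta_p N j * eta_p N (-j)))
      - msum N ?R (\<lambda>j. (?w r j * ?w s (-j) * of_int j) \<cdot>\<^sub>m (eta_p N j * eta_p N (-j)))
      + msum N ?R (\<lambda>j. (?w r j * ?w s j * 0) \<cdot>\<^sub>m (eta_p N (-j) * eta_m N (-j)))
      - msum N ?R (\<lambda>j. (?w r j * ?w s j * 0) \<cdot>\<^sub>m (eta_p N j * eta_m N (-j)))"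
    by (rule comm_collapse[where ?s1.0="\<lambda>j. j" and ?s2.0="\<lambda>j. -j" and ?s3.0="\<lambda>j. j" and ?s4.0="\<lambda>j. j"
          and ?c1.0="\<lambda>j. of_int j" and ?c2.0="\<lambda>j. of_int j" and ?c3.0="\<lambda>j. 0" and ?c4.0="\<lambda>j. 0"
          and P="eta_p N" and Q="\<lambda>j. eta_m N (-j)" and R="eta_p N" and T="\<lambda>k. eta_p N (-k)"])
       (auto simp: mode_range_neg BA_anti[OF N] AA_anti zero_as[symmetric])
  have E2: "commutator (msum N ?R (\<lambda>j. ?w r j \<cdot>\<^sub>m (eta_m N j * eta_p N (-j)))) (msum N ?R (\<lambda>k. ?w s k \<cdot>\<^sub>m (eta_p N k * eta_p N (-k))))
    = msum N ?R (\<lambda>j. (?w r j * ?w s j * 0) \<cdot>\<^sub>m (eta_m N j * eta_p N (-j)))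
      - msum N ?R (\<lambda>j. (?w r j * ?w s j * 0) \<cdot>\<^sub>m (eta_m N j * eta_p N j))
      + msum N ?R (\<lambda>j. (?w r j * ?w s (-j) * (- of_int j)) \<cdot>\<^sub>m (eta_p N (- (- j)) * eta_p N (-j)))
      - msum N ?R (\<lambda>j. (?w r j * ?w s j * (- of_int j)) \<cdot>\<^sub>m (eta_p N j * eta_p N (-j)))"
    by (rule comm_collapse[where ?s1.0="\<lambda>j. j" and ?s2.0="\<lambda>j. j" and ?s3.0="\<lambda>j. -j" and ?s4.0="\<lambda>j. j"
          and ?c1.0="\<lambda>j. 0" and ?c2.0="\<lambda>j. 0" and ?c3.0="\<lambda>j. - of_int j" and ?c4.0="\<lambda>j. - of_int j"
          and P="eta_m N" and Q="\<lambda>j. eta_p N (-j)" and R="eta_p N" and T="\<lambda>k. eta_p N (-k)"])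
       (auto simp: mode_range_neg BA_anti[OF N] AA_anti zero_as[symmetric])
  have cM: "\<And>j. ?M j \<in> DD N" by simp
  have L: "commutator (W_zero N r) (W_plus N s) = msum N ?R (\<lambda>j.
      ((?w r j * ?w s j * of_int j - ?w r j * ?w s (-j) * of_int j)
      + (?w r j * ?w s (-j) * (- of_int j) - ?w r j * ?w s j * (- of_int j))) \<cdot>\<^sub>m ?M j)"
    unfolding W_zero_eq[OF N r] W_plus_eq[OF N s]
    by (simp add: comm_add_left[where N=N] E1 E2 zero_smult_DD[where N=N] add_zero_DD[where N=N]
         minus_zero_DD[where N=N] lc_add[where N=N] lc_minus[where N=N] del: of_real_minus)
  have R: "(-8) \<cdot>\<^sub>m W_plus N (r + s + 2) + 8 \<cdot>\<^sub>m W_plus N (r + s)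
      = msum N ?R (\<lambda>j. ((-8) * ?w (r+s+2) j + 8 * ?w (r+s) j) \<cdot>\<^sub>m ?M j)"
  proof -
    have ev: "even (r+s+2)" "even (r+s)" using r s by auto
    show ?thesis unfolding W_plus_eq[OF N ev(1)] W_plus_eq[OF N ev(2)]
      by (simp add: lc_smult[where N=N] lc_add[where N=N] del: of_real_minus)
  qed
  show ?thesis unfolding L R
  proof (rule msum_cong[OF refl])
    fix j
    show "((?w r j * ?w s j * of_int j - ?w r j * ?w s (-j) * of_int j)
      + (?w r j * ?w s (-j) * (- of_int j) - ?w r j * ?w s j * (- of_int j))) \<cdot>\<^sub>m ?M j
      = ((-8) * ?w (r+s+2) j + 8 * ?w (r+s) j) \<cdot>\<^sub>m ?M j"
    proof -
      have "(?w r j * ?w s j * of_int j - ?w r j * ?w s (-j) * of_int j)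
        + (?w r j * ?w s (-j) * (- of_int j) - ?w r j * ?w s j * (- of_int j))
        = 4 * (of_int j * ?w r j * ?w s j)" by (simp add: wco_neg algebra_simps)
      also have "\<dots> = 4 * (2 * (?w (r+s) j - ?w (r+s+2) j))" using coef_id_c[of j N r s] by simp
      also have "\<dots> = (-8) * ?w (r+s+2) j + 8 * ?w (r+s) j" by (simp add: algebra_simps)
      finally show ?thesis by simp
    qed
  qed
qed


lemma zero_add_DD: "(A::complex mat) \<in> DD N \<Longrightarrow> 0\<^sub>m (dimH N) (dimH N) + A = A" by (intro eq_matI) auto
lemma add_minus_assoc_DD: "(A::complex mat) \<in> DD N \<Longrightarrow> B \<in> DD N \<Longrightarrow> C \<in> DD N \<Longrightarrow> A + B - C = A + (B - C)"
  by (intro eq_matI) auto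
lemma regroup_DD: "(A::complex mat) \<in> DD N \<Longrightarrow> B \<in> DD N \<Longrightarrow> C \<in> DD N \<Longrightarrow> D \<in> DD N \<Longrightarrow>
   a \<cdot>\<^sub>m (A + B) + b \<cdot>\<^sub>m (C + D) = (a \<cdot>\<^sub>m A + b \<cdot>\<^sub>m C) + (a \<cdot>\<^sub>m B + b \<cdot>\<^sub>m D)"
  by (intro eq_matI) (auto simp: algebra_simps)

lemma ident2:
  assumes N: "even N" "2 \<le> N" and r: "even r" and s: "even s"
  shows "commutator (W_zero N r) (W_minus N s)
           = 8 \<cdot>\<^sub>m W_minus N (r + s + 2) + (-8) \<cdot>\<^sub>m W_minus N (r + s)"
proof -
  let ?R = "mode_range N"
  let ?w = "\<lambda>r j. complex_of_real (wco N r j)"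
  let ?M = "\<lambda>j. eta_m N j * eta_m N (-j)"
  have E1: "commutator (msum N ?R (\<lambda>j. ?w r j \<cdot>\<^sub>m (eta_p N j * eta_m N (-j)))) (msum N ?R (\<lambda>k. ?w s k \<cdot>\<^sub>m (eta_m N k * eta_m N (-k))))
    = msum N ?R (\<lambda>j. (?w r j * ?w s j * 0) \<cdot>\<^sub>m (eta_p N j * eta_m N (-j)))
      - msum N ?R (\<lambda>j. (?w r j * ?w s j * 0) \<cdot>\<^sub>m (eta_p N j * eta_m N j))
      + msum N ?R (\<lambda>j. (?w r j * ?w s (-j) * of_int j) \<cdot>\<^sub>m (eta_m N (- (-j)) * eta_m N (-j)))
      - msum N ?R (\<lambda>j. (?w r j * ?w s j * of_int j) \<cdot>\<^sub>m (eta_m N j * eta_m N (-j)))"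
    by (rule comm_collapse[where ?s1.0="\<lambda>j. j" and ?s2.0="\<lambda>j. j" and ?s3.0="\<lambda>j. -j" and ?s4.0="\<lambda>j. j"
          and ?c1.0="\<lambda>j. 0" and ?c2.0="\<lambda>j. 0" and ?c3.0="\<lambda>j. of_int j" and ?c4.0="\<lambda>j. of_int j"
          and P="eta_p N" and Q="\<lambda>j. eta_m N (-j)" and R="eta_m N" and T="\<lambda>k. eta_m N (-k)"])
       (auto simp: mode_range_neg AB_anti[OF N] BB_anti zero_as[symmetric])
  have E2: "commutator (msum N ?R (\<lambda>j. ?w r j \<cdot>\<^sub>m (eta_m N j * eta_p N (-j)))) (msum N ?R (\<lambda>k. ?w s k \<cdot>\<^sub>m (eta_m N k * eta_m N (-k))))
    = msum N ?R (\<lambda>j. (?w r j * ?w s j * (- of_int j)) \<cdot>\<^sub>m (eta_m N j * eta_m N (-j)))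
      - msum N ?R (\<lambda>j. (?w r j * ?w s (-j) * (- of_int j)) \<cdot>\<^sub>m (eta_m N j * eta_m N (-j)))
      + msum N ?R (\<lambda>j. (?w r j * ?w s j * 0) \<cdot>\<^sub>m (eta_m N (-j) * eta_p N (-j)))
      - msum N ?R (\<lambda>j. (?w r j * ?w s j * 0) \<cdot>\<^sub>m (eta_m N j * eta_p N (-j)))"
    by (rule comm_collapse[where ?s1.0="\<lambda>j. j" and ?s2.0="\<lambda>j. -j" and ?s3.0="\<lambda>j. j" and ?s4.0="\<lambda>j. j"
          and ?c1.0="\<lambda>j. - of_int j" and ?c2.0="\<lambda>j. - of_int j" and ?c3.0="\<lambda>j. 0" and ?c4.0="\<lambda>j. 0"
          and P="eta_m N" and Q="\<lambda>j. eta_p N (-j)" and R="eta_m N" and T="\<lambda>k. eta_m N (-k)"])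
       (auto simp: mode_range_neg AB_anti[OF N] BB_anti zero_as[symmetric])
  have L: "commutator (W_zero N r) (W_minus N s) = msum N ?R (\<lambda>j.
      ((?w r j * ?w s (-j) * of_int j - ?w r j * ?w s j * of_int j)
      + (?w r j * ?w s j * (- of_int j) - ?w r j * ?w s (-j) * (- of_int j))) \<cdot>\<^sub>m ?M j)"
    unfolding W_zero_eq[OF N r] W_minus_eq[OF N s]
    by (simp add: comm_add_left[where N=N] E1 E2 zero_smult_DD[where N=N] add_zero_DD[where N=N]
         zero_add_DD[where N=N] add_minus_assoc_DD[where N=N]
         minus_zero_DD[where N=N] lc_add[where N=N] lc_minus[where N=N] del: of_real_minus)
  have R: "8 \<cdot>\<^sub>m W_minus N (r + s + 2) + (-8) \<cdot>\<^sub>m W_minus N (r + s)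
      = msum N ?R (\<lambda>j. (8 * ?w (r+s+2) j + (-8) * ?w (r+s) j) \<cdot>\<^sub>m ?M j)"
  proof -
    have ev: "even (r+s+2)" "even (r+s)" using r s by auto
    show ?thesis unfolding W_minus_eq[OF N ev(1)] W_minus_eq[OF N ev(2)]
      by (simp add: lc_smult[where N=N] lc_add[where N=N] del: of_real_minus)
  qed
  show ?thesis unfolding L R
  proof (rule msum_cong[OF refl])
    fix j
    have "(?w r j * ?w s (-j) * of_int j - ?w r j * ?w s j * of_int j)
        + (?w r j * ?w s j * (- of_int j) - ?w r j * ?w s (-j) * (- of_int j))
        = -4 * (of_int j * ?w r j * ?w s j)" by (simp add: wco_neg algebra_simps)
    also have "\<dots> = -4 * (2 * (?w (r+s) j - ?w (r+s+2) j))" using coef_id_c[of j N r s] by simp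
    also have "\<dots> = 8 * ?w (r+s+2) j + (-8) * ?w (r+s) j" by (simp add: algebra_simps)
    finally show "((?w r j * ?w s (-j) * of_int j - ?w r j * ?w s j * of_int j)
      + (?w r j * ?w s j * (- of_int j) - ?w r j * ?w s (-j) * (- of_int j))) \<cdot>\<^sub>m ?M j
      = (8 * ?w (r+s+2) j + (-8) * ?w (r+s) j) \<cdot>\<^sub>m ?M j" by simp
  qed
qed

lemma ident3:
  assumes N: "even N" "2 \<le> N" and r: "even r" and s: "even s"
  shows "commutator (W_plus N r) (W_minus N s)
           = 4 \<cdot>\<^sub>m W_zero N (r + s + 2) + (-4) \<cdot>\<^sub>m W_zero N (r + s)"
proof -
  let ?R = "mode_range N"
  let ?w = "\<lambda>r j. complex_of_real (wco N r j)"
  let ?Ma = "\<lambda>j. eta_p N j * eta_m N (-j)"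
  let ?Mb = "\<lambda>j. eta_m N j * eta_p N (-j)"
  have E: "commutator (msum N ?R (\<lambda>j. ?w r j \<cdot>\<^sub>m (eta_p N j * eta_p N (-j)))) (msum N ?R (\<lambda>k. ?w s k \<cdot>\<^sub>m (eta_m N k * eta_m N (-k))))
    = msum N ?R (\<lambda>j. (?w r j * ?w s j * (- of_int j)) \<cdot>\<^sub>m (eta_p N j * eta_m N (-j)))
      - msum N ?R (\<lambda>j. (?w r j * ?w s (-j) * (- of_int j)) \<cdot>\<^sub>m (eta_p N j * eta_m N (-j)))
      + msum N ?R (\<lambda>j. (?w r j * ?w s (-j) * of_int j) \<cdot>\<^sub>m (eta_m N (- (-j)) * eta_p N (-j)))
      - msum N ?R (\<lambda>j. (?w r j * ?w s j * of_int j) \<cdot>\<^sub>m (eta_m N j * eta_p N (-j)))"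
    by (rule comm_collapse[where ?s1.0="\<lambda>j. j" and ?s2.0="\<lambda>j. -j" and ?s3.0="\<lambda>j. -j" and ?s4.0="\<lambda>j. j"
          and ?c1.0="\<lambda>j. - of_int j" and ?c2.0="\<lambda>j. - of_int j" and ?c3.0="\<lambda>j. of_int j" and ?c4.0="\<lambda>j. of_int j"
          and P="eta_p N" and Q="\<lambda>j. eta_p N (-j)" and R="eta_m N" and T="\<lambda>k. eta_m N (-k)"])
       (auto simp: mode_range_neg AB_anti[OF N])
  have L: "commutator (W_plus N r) (W_minus N s) =
      msum N ?R (\<lambda>j. (?w r j * ?w s j * (- of_int j) - ?w r j * ?w s (-j) * (- of_int j)) \<cdot>\<^sub>m ?Ma j)
    + msum N ?R (\<lambda>j. (?w r j * ?w s (-j) * of_int j - ?w r j * ?w s j * of_int j) \<cdot>\<^sub>m ?Mb j)"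
    unfolding W_plus_eq[OF N r] W_minus_eq[OF N s] E
    by (simp add: add_minus_assoc_DD[where N=N] lc_minus[where N=N] del: of_real_minus)
  have R: "4 \<cdot>\<^sub>m W_zero N (r + s + 2) + (-4) \<cdot>\<^sub>m W_zero N (r + s)
      = msum N ?R (\<lambda>j. (4 * ?w (r+s+2) j + (-4) * ?w (r+s) j) \<cdot>\<^sub>m ?Ma j)
      + msum N ?R (\<lambda>j. (4 * ?w (r+s+2) j + (-4) * ?w (r+s) j) \<cdot>\<^sub>m ?Mb j)"
  proof -
    have ev: "even (r+s+2)" "even (r+s)" using r s by auto
    show ?thesis unfolding W_zero_eq[OF N ev(1)] W_zero_eq[OF N ev(2)]
      by (simp add: regroup_DD[where N=N] lc_smult[where N=N] lc_add[where N=N] del: of_real_minus)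
  qed
  have cf: "\<And>j. ?w r j * ?w s j * (- of_int j) - ?w r j * ?w s (-j) * (- of_int j) = 4 * ?w (r+s+2) j + (-4) * ?w (r+s) j"
    "\<And>j. ?w r j * ?w s (-j) * of_int j - ?w r j * ?w s j * of_int j = 4 * ?w (r+s+2) j + (-4) * ?w (r+s) j"
  proof -
    fix j
    have h: "of_int j * ?w r j * ?w s j = 2 * (?w (r+s) j - ?w (r+s+2) j)" by (rule coef_id_c)
    have "?w r j * ?w s j * (- of_int j) - ?w r j * ?w s (-j) * (- of_int j) = -2 * (of_int j * ?w r j * ?w s j)"
      by (simp add: wco_neg algebra_simps)
    also have "\<dots> = 4 * ?w (r+s+2) j + (-4) * ?w (r+s) j" unfolding h by (simp add: algebra_simps)
    finally show "?w r j * ?w s j * (- of_int j) - ?w r j * ?w s (-j) * (- of_int j) = 4 * ?w (r+s+2) j + (-4) * ?w (r+s) j" .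
    have "?w r j * ?w s (-j) * of_int j - ?w r j * ?w s j * of_int j = -2 * (of_int j * ?w r j * ?w s j)"
      by (simp add: wco_neg algebra_simps)
    also have "\<dots> = 4 * ?w (r+s+2) j + (-4) * ?w (r+s) j" unfolding h by (simp add: algebra_simps)
    finally show "?w r j * ?w s (-j) * of_int j - ?w r j * ?w s j * of_int j = 4 * ?w (r+s+2) j + (-4) * ?w (r+s) j" .
  qed
  show ?thesis unfolding L R cf ..
qed


theorem mainTheorem7:
  fixes N r s :: nat
  assumes "even N" and "N \<ge> 2" and "even r" and "even s"
  shows "commutator (W_zero N r) (W_plus N s)
           = (-8) \<cdot>\<^sub>m W_plus N (r + s + 2) + 8 \<cdot>\<^sub>m W_plus N (r + s)
       \<and> commutator (W_zero N r) (W_minus N s)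
           = 8 \<cdot>\<^sub>m W_minus N (r + s + 2) + (-8) \<cdot>\<^sub>m W_minus N (r + s)
       \<and> commutator (W_plus N r) (W_minus N s)
           = 4 \<cdot>\<^sub>m W_zero N (r + s + 2) + (-4) \<cdot>\<^sub>m W_zero N (r + s)"
  using ident1[OF assms] ident2[OF assms] ident3[OF assms] by blast

end
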